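(* Let $a>0$ and $\epsilon\in[0,\tfrac12]$ be fixed with $a(\sqrt{1-\epsilon}-\sqrt\epsilon)^2<1$, and consider the binary censored block model with $p=a\log n/n$ in which $\sigma^*$ is chosen uniformly at random from $\{\pm1\}^n$. Then for any sequence of estimators $\widehat Y_n$ (functions of $A$), $\mathbb P\{\widehat Y_n=Y^*\}\to0$ as $n\to\infty$.
   Context: Binary censored block model: $G\sim\mathcal G(n,p)$ (Erdős–Rényi, independent of $\sigma^*$); each edge $(i,j)$ independently gets label $L_{ij}=\sigma^*_i\sigma^*_j$ with probability $1-\epsilon$ and $L_{ij}=-\sigma^*_i\sigma^*_j$ with probability $\epsilon$. $A$ is the symmetric weighted adjacency matrix with $A_{ij}=L_{ij}$ on edges and $0$ otherwise. $Y^*=\sigma^*(\sigma^* )^\top$. *)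

theory Defs
  imports "HOL-Analysis.Analysis"
begin

text \<open>Entry A i j = 0 means no edge;
  otherwise A i j is the (possibly flipped) label L_ij.\<close>

definition sign_vectors :: "nat \<Rightarrow> (nat \<Rightarrow> int) set" where
  "sign_vectors n = {\<sigma>. (\<forall>i<n. \<sigma> i = 1 \<or> \<sigma> i = -1) \<and> (\<forall>i\<ge>n. \<sigma> i = 1)}"

definition observations :: "nat \<Rightarrow> (nat \<Rightarrow> nat \<Rightarrow> int) set" where
  "observations n = {A. (\<forall>i j. A i j \<in> {-1, 0, 1}) \<and> (\<forall>i j. A i j = A j i)
      \<and> (\<forall>i. A i i = 0) \<and> (\<forall>i j. (n \<le> i \<or> n \<le> j) \<longrightarrow> A i j = 0)}"

definition pair_lik :: "real \<Rightarrow> real \<Rightarrow> int \<Rightarrow> int \<Rightarrow> real" where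
  "pair_lik p \<epsilon> s x =
     (if x = 0 then 1 - p else if x = s then p * (1 - \<epsilon>) else if x = - s then p * \<epsilon> else 0)"

definition cbm_lik :: "nat \<Rightarrow> real \<Rightarrow> real \<Rightarrow> (nat \<Rightarrow> int) \<Rightarrow> (nat \<Rightarrow> nat \<Rightarrow> int) \<Rightarrow> real" where
  "cbm_lik n p \<epsilon> \<sigma> A =
     (\<Prod>(i, j) \<in> {(i, j). i < j \<and> j < n}. pair_lik p \<epsilon> (\<sigma> i * \<sigma> j) (A i j))"

definition success_prob ::
  "nat \<Rightarrow> real \<Rightarrow> real \<Rightarrow> ((nat \<Rightarrow> nat \<Rightarrow> int) \<Rightarrow> (nat \<Rightarrow> nat \<Rightarrow> real)) \<Rightarrow> real" where
  "success_prob n p \<epsilon> Yhat =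
     (\<Sum>\<sigma> \<in> sign_vectors n. \<Sum>A \<in> observations n.
        (1 / 2 ^ n) * cbm_lik n p \<epsilon> \<sigma> A *
        (if (\<forall>i<n. \<forall>j<n. Yhat A i j = real_of_int (\<sigma> i * \<sigma> j)) then 1 else 0))"

end

theory Submission
  imports Defs "HOL-Real_Asymp.Real_Asymp"
begin


definition pairs :: "nat \<Rightarrow> (nat \<times> nat) set" where
  "pairs n = {(a, b). a < b \<and> b < n}"

definition vals :: "int set" where "vals = {-1, 0, 1}"

definition symx :: "nat \<Rightarrow> (nat \<times> nat \<Rightarrow> int) \<Rightarrow> nat \<Rightarrow> nat \<Rightarrow> int" where
  "symx n x a b = (if (a, b) \<in> pairs n then x (a, b) else if (b, a) \<in> pairs n then x (b, a) else 0)"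

lemma finite_pairs [simp]: "finite (pairs n)"
proof -
  have "pairs n \<subseteq> {..<n} \<times> {..<n}" by (auto simp: pairs_def)
  thus ?thesis by (rule finite_subset) auto
qed

lemma finite_vals [simp]: "finite vals" by (simp add: vals_def)

lemma obs_bij: "bij_betw (symx n) (PiE (pairs n) (\<lambda>_. vals)) (observations n)"
proof (rule bij_betw_byWitness[where f' = "\<lambda>A. restrict (\<lambda>e. A (fst e) (snd e)) (pairs n)"])
  show "\<forall>a\<in>PiE (pairs n) (\<lambda>_. vals). restrict (\<lambda>e. symx n a (fst e) (snd e)) (pairs n) = a"
    by (auto simp: symx_def PiE_def extensional_def restrict_def fun_eq_iff)
  show "\<forall>A\<in>observations n. symx n (restrict (\<lambda>e. A (fst e) (snd e)) (pairs n)) = A"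
  proof
    fix A assume A: "A \<in> observations n"
    show "symx n (restrict (\<lambda>e. A (fst e) (snd e)) (pairs n)) = A"
    proof (intro ext)
      fix a b
      show "symx n (restrict (\<lambda>e. A (fst e) (snd e)) (pairs n)) a b = A a b"
        using A unfolding symx_def observations_def pairs_def
        by (cases "a < b"; cases "b < a"; cases "a < n"; cases "b < n") (auto simp: not_less)
    qed
  qed
  show "symx n ` PiE (pairs n) (\<lambda>_. vals) \<subseteq> observations n"
  proof
    fix A assume "A \<in> symx n ` PiE (pairs n) (\<lambda>_. vals)"
    then obtain x where x: "x \<in> PiE (pairs n) (\<lambda>_. vals)" and A: "A = symx n x" by auto
    have xv: "e \<in> pairs n \<Longrightarrow> x e \<in> {-1,0,1}" for e using x by (auto simp: vals_def)
    show "A \<in> observations n"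
      unfolding observations_def A
    proof (intro CollectI conjI allI impI)
      fix i j
      show "symx n x i j \<in> {-1,0,1}" using xv[of "(i,j)"] xv[of "(j,i)"] by (auto simp: symx_def)
      show "symx n x i j = symx n x j i" by (auto simp: symx_def pairs_def)
      show "(n \<le> i \<or> n \<le> j) \<Longrightarrow> symx n x i j = 0" by (auto simp: symx_def pairs_def)
    next
      fix i show "symx n x i i = 0" by (auto simp: symx_def pairs_def)
    qed
  qed
  show "(\<lambda>A. restrict (\<lambda>e. A (fst e) (snd e)) (pairs n)) ` observations n \<subseteq> PiE (pairs n) (\<lambda>_. vals)"
  proof
    fix y assume "y \<in> (\<lambda>A. restrict (\<lambda>e. A (fst e) (snd e)) (pairs n)) ` observations n"
    then obtain A where A: "A \<in> observations n" and y: "y = restrict (\<lambda>e. A (fst e) (snd e)) (pairs n)" by auto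
    have "\<And>i j. A i j \<in> vals" using A by (simp add: observations_def vals_def)
    thus "y \<in> PiE (pairs n) (\<lambda>_. vals)" unfolding y by auto
  qed
qed

lemma finite_obs [simp]: "finite (observations n)"
proof -
  have "finite (PiE (pairs n) (\<lambda>_. vals))" by (rule finite_PiE) auto
  thus ?thesis using bij_betw_finite[OF obs_bij] by blast
qed

lemma sum_obs: "(\<Sum>A\<in>observations n. g A) = (\<Sum>x\<in>PiE (pairs n) (\<lambda>_. vals). g (symx n x))"
  using sum.reindex_bij_betw[OF obs_bij, of g] by simp

lemma cbm_lik_symx:
  "x \<in> PiE (pairs n) (\<lambda>_. vals) \<Longrightarrow>
   cbm_lik n p \<epsilon> \<sigma> (symx n x) = (\<Prod>e\<in>pairs n. pair_lik p \<epsilon> (\<sigma> (fst e) * \<sigma> (snd e)) (x e))"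
  unfolding cbm_lik_def pairs_def[symmetric]
  by (intro prod.cong refl) (auto simp: symx_def)

lemma prod_of_bool: "finite S \<Longrightarrow> (\<Prod>e\<in>S. (of_bool (P e) :: real)) = of_bool (\<forall>e\<in>S. P e)"
  by (induction S rule: finite_induct) auto

lemma expect_prod:
  assumes "\<And>x. x \<in> PiE (pairs n) (\<lambda>_. vals) \<Longrightarrow> h (symx n x) = (\<Prod>e\<in>pairs n. c e (x e))"
  shows "(\<Sum>A\<in>observations n. cbm_lik n p \<epsilon> \<sigma> A * h A) =
         (\<Prod>e\<in>pairs n. \<Sum>v\<in>vals. pair_lik p \<epsilon> (\<sigma> (fst e) * \<sigma> (snd e)) v * c e v)"
proof -
  have "(\<Sum>A\<in>observations n. cbm_lik n p \<epsilon> \<sigma> A * h A) =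
     (\<Sum>x\<in>PiE (pairs n) (\<lambda>_. vals). \<Prod>e\<in>pairs n. pair_lik p \<epsilon> (\<sigma> (fst e) * \<sigma> (snd e)) (x e) * c e (x e))"
    unfolding sum_obs
    by (intro sum.cong refl) (simp add: cbm_lik_symx assms prod.distrib)
  also have "\<dots> = (\<Prod>e\<in>pairs n. \<Sum>v\<in>vals. pair_lik p \<epsilon> (\<sigma> (fst e) * \<sigma> (snd e)) v * c e v)"
    by (rule prod_sum_PiE[symmetric]) auto
  finally show ?thesis .
qed



lemma SV_pm: "\<sigma> \<in> sign_vectors n \<Longrightarrow> i < n \<Longrightarrow> \<sigma> i = 1 \<or> \<sigma> i = -1"
  by (auto simp: sign_vectors_def)

lemma SV_prod_pm: "\<sigma> \<in> sign_vectors n \<Longrightarrow> i < n \<Longrightarrow> j < n \<Longrightarrow> \<sigma> i * \<sigma> j = 1 \<or> \<sigma> i * \<sigma> j = -1"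
  using SV_pm[of \<sigma> n i] SV_pm[of \<sigma> n j] by auto

lemma pair_lik_0 [simp]: "pair_lik p \<epsilon> s 0 = 1 - p" by (simp add: pair_lik_def)

lemma pair_lik_pos: "s = 1 \<or> s = -1 \<Longrightarrow> pair_lik p \<epsilon> s s = p * (1 - \<epsilon>)" by (auto simp: pair_lik_def)
lemma pair_lik_neg: "s = 1 \<or> s = -1 \<Longrightarrow> pair_lik p \<epsilon> s (- s) = p * \<epsilon>" by (auto simp: pair_lik_def)

lemma sum_vals_delta: "t \<in> vals \<Longrightarrow> (\<Sum>v\<in>vals. f v * of_bool (v = t)) = (f t :: real)"
  by (auto simp: vals_def)

lemma sum_pair_lik: "s = 1 \<or> s = -1 \<Longrightarrow> (\<Sum>v\<in>vals. pair_lik p \<epsilon> s v) = 1"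
  by (auto simp: vals_def pair_lik_def algebra_simps)

lemma pair_lik_nonneg: "0 \<le> p \<Longrightarrow> p \<le> 1 \<Longrightarrow> 0 \<le> \<epsilon> \<Longrightarrow> \<epsilon> \<le> 1 \<Longrightarrow> 0 \<le> pair_lik p \<epsilon> s v"
  by (auto simp: pair_lik_def)

lemma cbm_lik_nonneg: "0 \<le> p \<Longrightarrow> p \<le> 1 \<Longrightarrow> 0 \<le> \<epsilon> \<Longrightarrow> \<epsilon> \<le> 1 \<Longrightarrow> 0 \<le> cbm_lik n p \<epsilon> \<sigma> A"
  unfolding cbm_lik_def by (intro prod_nonneg) (auto intro: pair_lik_nonneg)

definition tgt :: "(nat \<Rightarrow> int) \<Rightarrow> nat \<Rightarrow> nat set \<Rightarrow> nat set \<Rightarrow> nat \<Rightarrow> int" where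
  "tgt \<sigma> i D F j = (if j \<in> D then (if j \<in> F then - (\<sigma> i * \<sigma> j) else \<sigma> i * \<sigma> j) else 0)"

definition G :: "nat \<Rightarrow> (nat \<Rightarrow> int) \<Rightarrow> (nat \<Rightarrow> nat \<Rightarrow> int) \<Rightarrow> nat \<Rightarrow> nat set \<Rightarrow> nat set \<Rightarrow> bool" where
  "G n \<sigma> A i D F = (\<forall>j<n. j \<noteq> i \<longrightarrow> A i j = tgt \<sigma> i D F j)"

definition cG :: "(nat \<Rightarrow> int) \<Rightarrow> nat \<Rightarrow> nat set \<Rightarrow> nat set \<Rightarrow> nat \<times> nat \<Rightarrow> int \<Rightarrow> real" where
  "cG \<sigma> i D F e v = of_bool (if fst e = i then v = tgt \<sigma> i D F (snd e)
                      else if snd e = i then v = tgt \<sigma> i D F (fst e) else True)"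

lemma G_prod:
  assumes x: "x \<in> PiE (pairs n) (\<lambda>_. vals)" and i: "i < n"
  shows "of_bool (G n \<sigma> (symx n x) i D F) = (\<Prod>e\<in>pairs n. cG \<sigma> i D F e (x e))"
proof -
  let ?P = "\<lambda>e v. if fst e = i then v = tgt \<sigma> i D F (snd e)
                      else if snd e = i then v = tgt \<sigma> i D F (fst e) else True"
  have "(\<Prod>e\<in>pairs n. cG \<sigma> i D F e (x e)) = of_bool (\<forall>e\<in>pairs n. ?P e (x e))"
    unfolding cG_def by (rule prod_of_bool) simp
  moreover have "G n \<sigma> (symx n x) i D F \<longleftrightarrow> (\<forall>e\<in>pairs n. ?P e (x e))"
  proof
    assume g: "G n \<sigma> (symx n x) i D F"
    show "\<forall>e\<in>pairs n. ?P e (x e)"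
    proof
      fix e assume e: "e \<in> pairs n"
      obtain a b where ab: "e = (a, b)" by (cases e)
      show "?P e (x e)"
      proof (cases "a = i")
        case True
        then show ?thesis using g e ab unfolding G_def by (auto simp: symx_def pairs_def)
      next
        case False
        show ?thesis
        proof (cases "b = i")
          case True
          have "a < i" "i < n" using e ab True by (auto simp: pairs_def)
          hence "symx n x i a = tgt \<sigma> i D F a" using g unfolding G_def by auto
          moreover have "symx n x i a = x (a, i)" using \<open>a < i\<close> \<open>i < n\<close> by (auto simp: symx_def pairs_def)
          ultimately show ?thesis using ab True \<open>a \<noteq> i\<close> by simp
        qed (use ab False in simp)
      qed
    qed
  next
    assume h: "\<forall>e\<in>pairs n. ?P e (x e)"
    show "G n \<sigma> (symx n x) i D F"
      unfolding G_def
    proof (intro allI impI)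
      fix j assume j: "j < n" "j \<noteq> i"
      show "symx n x i j = tgt \<sigma> i D F j"
      proof (cases "i < j")
        case True
        then show ?thesis using h[rule_format, of "(i,j)"] j by (auto simp: symx_def pairs_def)
      next
        case False
        then have "j < i" using j by auto
        then show ?thesis using h[rule_format, of "(j,i)"] j i by (auto simp: symx_def pairs_def)
      qed
    qed
  qed
  ultimately show ?thesis by simp
qed



definition EE :: "nat \<Rightarrow> real \<Rightarrow> real \<Rightarrow> (nat \<Rightarrow> int) \<Rightarrow> ((nat \<Rightarrow> nat \<Rightarrow> int) \<Rightarrow> real) \<Rightarrow> real" where
  "EE n p \<epsilon> \<sigma> h = (\<Sum>A\<in>observations n. cbm_lik n p \<epsilon> \<sigma> A * h A)"

lemma prod_pairs_at:
  assumes i: "i < n" and h1: "\<And>e. e \<in> pairs n \<Longrightarrow> fst e \<noteq> i \<Longrightarrow> snd e \<noteq> i \<Longrightarrow> h e = 1"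
  shows "(\<Prod>e\<in>pairs n. h e) = (\<Prod>j\<in>{..<n}-{i}. h (min i j, max i j))"
proof -
  let ?PI = "{e\<in>pairs n. fst e = i \<or> snd e = i}"
  have "(\<Prod>e\<in>pairs n. h e) = (\<Prod>e\<in>?PI. h e)"
    by (rule prod.mono_neutral_right) (auto intro: h1)
  also have "?PI = (\<lambda>j. (min i j, max i j)) ` ({..<n}-{i})"
  proof (intro equalityI subsetI)
    fix e assume "e \<in> ?PI"
    then obtain a b where e: "e = (a,b)" "a < b" "b < n" "a = i \<or> b = i" by (auto simp: pairs_def)
    show "e \<in> (\<lambda>j. (min i j, max i j)) ` ({..<n}-{i})"
    proof (cases "a = i")
      case True thus ?thesis using e by (intro image_eqI[of _ _ b]) (auto simp: min_def max_def)
    next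
      case False thus ?thesis using e by (intro image_eqI[of _ _ a]) (auto simp: min_def max_def)
    qed
  next
    fix e assume "e \<in> (\<lambda>j. (min i j, max i j)) ` ({..<n}-{i})"
    then obtain j where j: "j < n" "j \<noteq> i" "e = (min i j, max i j)" by auto
    then show "e \<in> ?PI" using i by (cases "i < j") (auto simp: pairs_def min_def max_def)
  qed
  also have "(\<Prod>e\<in>\<dots>. h e) = (\<Prod>j\<in>{..<n}-{i}. h (min i j, max i j))"
  proof (subst prod.reindex)
    show "inj_on (\<lambda>j. (min i j, max i j)) ({..<n} - {i})"
      by (auto simp: inj_on_def min_def max_def split: if_splits)
  qed (simp add: o_def)
  finally show ?thesis .
qed

lemma tgt_vals: "\<sigma> \<in> sign_vectors n \<Longrightarrow> i < n \<Longrightarrow> D \<subseteq> {..<n} \<Longrightarrow> tgt \<sigma> i D F j \<in> vals"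
  using SV_prod_pm[of \<sigma> n i j] by (auto simp: tgt_def vals_def)

lemma beta_G:
  assumes s: "\<sigma> \<in> sign_vectors n" and i: "i < n" and D: "D \<subseteq> {..<n}" and e: "e \<in> pairs n"
  shows "(\<Sum>v\<in>vals. pair_lik p \<epsilon> (\<sigma> (fst e) * \<sigma> (snd e)) v * cG \<sigma> i D F e v) =
     (if fst e = i then pair_lik p \<epsilon> (\<sigma> i * \<sigma> (snd e)) (tgt \<sigma> i D F (snd e))
      else if snd e = i then pair_lik p \<epsilon> (\<sigma> i * \<sigma> (fst e)) (tgt \<sigma> i D F (fst e)) else 1)"
proof -
  have fe: "fst e < n" "snd e < n" using e by (auto simp: pairs_def)
  show ?thesis
  proof (cases "fst e = i")
    case True thus ?thesis unfolding cG_def by (simp add: sum_vals_delta tgt_vals[OF s i D])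
  next
    case False
    show ?thesis
    proof (cases "snd e = i")
      case True thus ?thesis using False unfolding cG_def
        by (simp add: sum_vals_delta tgt_vals[OF s i D] mult.commute)
    next
      case False2: False
      thus ?thesis using False unfolding cG_def
        by (simp add: sum_pair_lik SV_prod_pm[OF s fe])
    qed
  qed
qed

lemma E_G:
  assumes s: "\<sigma> \<in> sign_vectors n" and i: "i < n" and D: "D \<subseteq> {..<n} - {i}" and F: "F \<subseteq> D"
    and cD: "card D = 2*k" and cF: "card F = k"
  shows "EE n p \<epsilon> \<sigma> (\<lambda>A. of_bool (G n \<sigma> A i D F)) = (p*\<epsilon>)^k * (p*(1-\<epsilon>))^k * (1-p)^(n-1-2*k)"
proof -
  have D': "D \<subseteq> {..<n}" using D by auto
  have "EE n p \<epsilon> \<sigma> (\<lambda>A. of_bool (G n \<sigma> A i D F)) =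
      (\<Prod>e\<in>pairs n. \<Sum>v\<in>vals. pair_lik p \<epsilon> (\<sigma> (fst e) * \<sigma> (snd e)) v * cG \<sigma> i D F e v)"
    unfolding EE_def by (rule expect_prod) (rule G_prod[OF _ i])
  also have "\<dots> = (\<Prod>e\<in>pairs n. (if fst e = i then pair_lik p \<epsilon> (\<sigma> i * \<sigma> (snd e)) (tgt \<sigma> i D F (snd e))
      else if snd e = i then pair_lik p \<epsilon> (\<sigma> i * \<sigma> (fst e)) (tgt \<sigma> i D F (fst e)) else 1))"
    by (intro prod.cong refl beta_G[OF s i D'])
  also have "\<dots> = (\<Prod>j\<in>{..<n}-{i}. pair_lik p \<epsilon> (\<sigma> i * \<sigma> j) (tgt \<sigma> i D F j))"
  proof (subst prod_pairs_at[OF i], simp, intro prod.cong refl)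
    fix j assume "j \<in> {..<n} - {i}"
    then show "(if fst (min i j, max i j) = i then pair_lik p \<epsilon> (\<sigma> i * \<sigma> (snd (min i j, max i j))) (tgt \<sigma> i D F (snd (min i j, max i j)))
      else if snd (min i j, max i j) = i then pair_lik p \<epsilon> (\<sigma> i * \<sigma> (fst (min i j, max i j))) (tgt \<sigma> i D F (fst (min i j, max i j))) else 1)
      = pair_lik p \<epsilon> (\<sigma> i * \<sigma> j) (tgt \<sigma> i D F j)"
      by (cases "i < j") (auto simp: min_def max_def)
  qed
  also have "\<dots> = (\<Prod>j\<in>F. pair_lik p \<epsilon> (\<sigma> i * \<sigma> j) (tgt \<sigma> i D F j)) *
     (\<Prod>j\<in>D - F. pair_lik p \<epsilon> (\<sigma> i * \<sigma> j) (tgt \<sigma> i D F j)) *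
     (\<Prod>j\<in>({..<n}-{i}) - D. pair_lik p \<epsilon> (\<sigma> i * \<sigma> j) (tgt \<sigma> i D F j))"
  proof -
    have fin: "finite ({..<n}-{i})" by auto
    have "(\<Prod>j\<in>{..<n}-{i}. pair_lik p \<epsilon> (\<sigma> i * \<sigma> j) (tgt \<sigma> i D F j)) =
       (\<Prod>j\<in>({..<n}-{i}) - D. pair_lik p \<epsilon> (\<sigma> i * \<sigma> j) (tgt \<sigma> i D F j)) *
       (\<Prod>j\<in>D. pair_lik p \<epsilon> (\<sigma> i * \<sigma> j) (tgt \<sigma> i D F j))"
      by (rule prod.subset_diff[OF D fin])
    moreover have "(\<Prod>j\<in>D. pair_lik p \<epsilon> (\<sigma> i * \<sigma> j) (tgt \<sigma> i D F j)) =
       (\<Prod>j\<in>D - F. pair_lik p \<epsilon> (\<sigma> i * \<sigma> j) (tgt \<sigma> i D F j)) *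
       (\<Prod>j\<in>F. pair_lik p \<epsilon> (\<sigma> i * \<sigma> j) (tgt \<sigma> i D F j))"
      by (rule prod.subset_diff[OF F]) (use fin D finite_subset in blast)
    ultimately show ?thesis by (simp add: mult_ac)
  qed
  also have "\<dots> = (p*\<epsilon>)^card F * (p*(1-\<epsilon>))^card (D - F) * (1-p)^card (({..<n}-{i}) - D)"
  proof -
    have "(\<Prod>j\<in>F. pair_lik p \<epsilon> (\<sigma> i * \<sigma> j) (tgt \<sigma> i D F j)) = (\<Prod>j\<in>F. p*\<epsilon>)"
      using F D by (intro prod.cong refl) (auto simp: tgt_def intro!: pair_lik_neg SV_prod_pm[OF s i])
    moreover have "(\<Prod>j\<in>D-F. pair_lik p \<epsilon> (\<sigma> i * \<sigma> j) (tgt \<sigma> i D F j)) = (\<Prod>j\<in>D-F. p*(1-\<epsilon>))"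
      using F D by (intro prod.cong refl) (auto simp: tgt_def intro!: pair_lik_pos SV_prod_pm[OF s i])
    moreover have "(\<Prod>j\<in>({..<n}-{i}) - D. pair_lik p \<epsilon> (\<sigma> i * \<sigma> j) (tgt \<sigma> i D F j)) = (\<Prod>j\<in>({..<n}-{i}) - D. 1 - p)"
      by (intro prod.cong refl) (auto simp: tgt_def)
    ultimately show ?thesis by simp
  qed
  also have "card (D - F) = k" using F cD cF by (subst card_Diff_subset) (auto intro: finite_subset[OF _ finite_subset[OF D]])
  also have "card (({..<n}-{i}) - D) = n - 1 - 2*k" using D i cD
    by (subst card_Diff_subset) (auto intro: finite_subset)
  finally show ?thesis using cF by simp
qed



lemma cG_outside: "fst e \<noteq> i \<Longrightarrow> snd e \<noteq> i \<Longrightarrow> cG \<sigma> i D F e v = 1"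
  by (simp add: cG_def)

lemma cG_e0:
  assumes "i \<noteq> j" "j \<notin> D"
  shows "cG \<sigma> i D F (min i j, max i j) v = of_bool (v = 0)"
  using assms by (cases "i < j") (auto simp: cG_def tgt_def min_def max_def)

lemma E_GG:
  assumes s: "\<sigma> \<in> sign_vectors n" and i: "i < n" and j: "j < n" and ij: "i \<noteq> j"
    and D: "D \<subseteq> {..<n}" and D': "D' \<subseteq> {..<n}" and jD: "j \<notin> D" and iD': "i \<notin> D'"
  shows "(1 - p) * EE n p \<epsilon> \<sigma> (\<lambda>A. of_bool (G n \<sigma> A i D F) * of_bool (G n \<sigma> A j D' F')) =
         EE n p \<epsilon> \<sigma> (\<lambda>A. of_bool (G n \<sigma> A i D F)) * EE n p \<epsilon> \<sigma> (\<lambda>A. of_bool (G n \<sigma> A j D' F'))"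
proof -
  define \<mu> where "\<mu> e v = pair_lik p \<epsilon> (\<sigma> (fst e) * \<sigma> (snd e)) v" for e v
  define \<alpha> where "\<alpha> e = (\<Sum>v\<in>vals. \<mu> e v * (cG \<sigma> i D F e v * cG \<sigma> j D' F' e v))" for e
  define \<beta> where "\<beta> e = (\<Sum>v\<in>vals. \<mu> e v * cG \<sigma> i D F e v)" for e
  define \<beta>' where "\<beta>' e = (\<Sum>v\<in>vals. \<mu> e v * cG \<sigma> j D' F' e v)" for e
  have EGG: "EE n p \<epsilon> \<sigma> (\<lambda>A. of_bool (G n \<sigma> A i D F) * of_bool (G n \<sigma> A j D' F')) = (\<Prod>e\<in>pairs n. \<alpha> e)"
    unfolding EE_def \<alpha>_def \<mu>_def
    by (rule expect_prod) (simp add: G_prod[OF _ i] G_prod[OF _ j] prod.distrib)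
  have EG1: "EE n p \<epsilon> \<sigma> (\<lambda>A. of_bool (G n \<sigma> A i D F)) = (\<Prod>e\<in>pairs n. \<beta> e)"
    unfolding EE_def \<beta>_def \<mu>_def by (rule expect_prod) (rule G_prod[OF _ i])
  have EG2: "EE n p \<epsilon> \<sigma> (\<lambda>A. of_bool (G n \<sigma> A j D' F')) = (\<Prod>e\<in>pairs n. \<beta>' e)"
    unfolding EE_def \<beta>'_def \<mu>_def by (rule expect_prod) (rule G_prod[OF _ j])
  define e0 where "e0 = (min i j, max i j)"
  have e0P: "e0 \<in> pairs n" using i j ij by (auto simp: e0_def pairs_def min_def max_def)
  have sum1: "e \<in> pairs n \<Longrightarrow> (\<Sum>v\<in>vals. \<mu> e v) = 1" for e
    unfolding \<mu>_def by (rule sum_pair_lik, rule SV_prod_pm[OF s]) (auto simp: pairs_def)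
  have rest: "\<alpha> e = \<beta> e * \<beta>' e" if e: "e \<in> pairs n - {e0}" for e
  proof -
    have "(fst e \<noteq> i \<and> snd e \<noteq> i) \<or> (fst e \<noteq> j \<and> snd e \<noteq> j)"
      using e ij by (cases e) (auto simp: e0_def pairs_def min_def max_def)
    then show ?thesis
    proof
      assume h: "fst e \<noteq> i \<and> snd e \<noteq> i"
      have "\<beta> e = 1" unfolding \<beta>_def using h e by (simp add: cG_outside sum1)
      moreover have "\<alpha> e = \<beta>' e" unfolding \<alpha>_def \<beta>'_def using h by (simp add: cG_outside)
      ultimately show ?thesis by simp
    next
      assume h: "fst e \<noteq> j \<and> snd e \<noteq> j"
      have "\<beta>' e = 1" unfolding \<beta>'_def using h e by (simp add: cG_outside sum1)
      moreover have "\<alpha> e = \<beta> e" unfolding \<alpha>_def \<beta>_def using h by (simp add: cG_outside)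
      ultimately show ?thesis by simp
    qed
  qed
  have c1: "cG \<sigma> i D F e0 v = of_bool (v = 0)" for v unfolding e0_def by (rule cG_e0[OF ij jD])
  have c2: "cG \<sigma> j D' F' e0 v = of_bool (v = 0)" for v
    using cG_e0[OF ij[symmetric] iD', of \<sigma> F' v] unfolding e0_def by (simp add: min.commute max.commute)
  have z: "(0::int) \<in> vals" by (simp add: vals_def)
  have a0: "\<alpha> e0 = 1 - p" unfolding \<alpha>_def c1 c2 by (simp add: \<mu>_def vals_def)
  have b0: "\<beta> e0 = 1 - p" unfolding \<beta>_def c1
    using sum_vals_delta[OF z, of "\<mu> e0"] by (simp add: \<mu>_def)
  have b0': "\<beta>' e0 = 1 - p" unfolding \<beta>'_def c2
    using sum_vals_delta[OF z, of "\<mu> e0"] by (simp add: \<mu>_def)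
  have "(1 - p) * (\<Prod>e\<in>pairs n. \<alpha> e) = (1-p) * (\<alpha> e0 * (\<Prod>e\<in>pairs n - {e0}. \<alpha> e))"
    by (subst prod.remove[OF _ e0P]) auto
  also have "\<dots> = (\<beta> e0 * (\<Prod>e\<in>pairs n - {e0}. \<beta> e)) * (\<beta>' e0 * (\<Prod>e\<in>pairs n - {e0}. \<beta>' e))"
    using rest by (simp add: a0 b0 b0' prod.distrib)
  also have "\<dots> = (\<Prod>e\<in>pairs n. \<beta> e) * (\<Prod>e\<in>pairs n. \<beta>' e)"
    by (simp add: prod.remove[OF _ e0P])
  finally show ?thesis using EGG EG1 EG2 by simp
qed



lemma Ex_one: "\<sigma> \<in> sign_vectors n \<Longrightarrow> EE n p \<epsilon> \<sigma> (\<lambda>_. 1) = 1"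
proof -
  assume s: "\<sigma> \<in> sign_vectors n"
  have "EE n p \<epsilon> \<sigma> (\<lambda>_. 1) = (\<Prod>e\<in>pairs n. \<Sum>v\<in>vals. pair_lik p \<epsilon> (\<sigma> (fst e) * \<sigma> (snd e)) v * (\<lambda>_ _. 1) e v)"
    unfolding EE_def by (rule expect_prod) simp
  also have "\<dots> = (\<Prod>e\<in>pairs n. 1)"
  proof (intro prod.cong refl)
    fix e assume "e \<in> pairs n"
    then have "fst e < n" "snd e < n" by (auto simp: pairs_def)
    then show "(\<Sum>v\<in>vals. pair_lik p \<epsilon> (\<sigma> (fst e) * \<sigma> (snd e)) v * (\<lambda>_ _. 1) e v) = 1"
      using sum_pair_lik[OF SV_prod_pm[OF s]] by simp
  qed
  finally show ?thesis by simp
qed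

lemma Ex_lin:
  "EE n p \<epsilon> \<sigma> (\<lambda>A. a * h1 A + b * h2 A + c) = a * EE n p \<epsilon> \<sigma> h1 + b * EE n p \<epsilon> \<sigma> h2 + c * EE n p \<epsilon> \<sigma> (\<lambda>_. 1)"
  unfolding EE_def by (simp add: algebra_simps sum.distrib sum_distrib_left)

lemma Ex_sum: "finite S \<Longrightarrow> EE n p \<epsilon> \<sigma> (\<lambda>A. \<Sum>x\<in>S. f x A) = (\<Sum>x\<in>S. EE n p \<epsilon> \<sigma> (f x))"
  unfolding EE_def by (simp add: sum_distrib_left sum.swap[of _ S])

lemma Ex_mono:
  assumes "0 \<le> p" "p \<le> 1" "0 \<le> \<epsilon>" "\<epsilon> \<le> 1" "\<And>A. A \<in> observations n \<Longrightarrow> f A \<le> g A"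
  shows "EE n p \<epsilon> \<sigma> f \<le> EE n p \<epsilon> \<sigma> g"
  unfolding EE_def using assms by (intro sum_mono mult_left_mono cbm_lik_nonneg) auto

lemma of_bool_sq [simp]: "(of_bool P :: real) * of_bool P = of_bool P" by (cases P) auto

definition Qs :: "nat \<Rightarrow> nat \<Rightarrow> nat \<Rightarrow> (nat set \<times> nat set) set" where
  "Qs n m k = {(D, F). D \<subseteq> {m..<n} \<and> card D = 2*k \<and> F \<subseteq> D \<and> card F = k}"

lemma finite_Qs [simp]: "finite (Qs n m k)"
proof -
  have "Qs n m k \<subseteq> Pow {m..<n} \<times> Pow {m..<n}" by (auto simp: Qs_def)
  thus ?thesis by (rule finite_subset) auto
qed

definition Zc :: "nat \<Rightarrow> nat \<Rightarrow> nat \<Rightarrow> (nat \<Rightarrow> int) \<Rightarrow> (nat \<Rightarrow> nat \<Rightarrow> int) \<Rightarrow> real" where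
  "Zc n m k \<sigma> A = (\<Sum>a\<in>{..<m} \<times> Qs n m k. of_bool (G n \<sigma> A (fst a) (fst (snd a)) (snd (snd a))))"

definition wt :: "nat \<Rightarrow> nat \<Rightarrow> real \<Rightarrow> real \<Rightarrow> real" where
  "wt n k p \<epsilon> = (p*\<epsilon>)^k * (p*(1-\<epsilon>))^k * (1-p)^(n-1-2*k)"

lemma G_unique:
  assumes s: "\<sigma> \<in> sign_vectors n" and i: "i < n"
    and g1: "G n \<sigma> A i D F" and g2: "G n \<sigma> A i D' F'"
    and D: "D \<subseteq> {..<n} - {i}" "F \<subseteq> D" and D': "D' \<subseteq> {..<n} - {i}" "F' \<subseteq> D'"
  shows "D = D' \<and> F = F'"
proof -
  have key: "\<And>D F. G n \<sigma> A i D F \<Longrightarrow> D \<subseteq> {..<n} - {i} \<Longrightarrow> F \<subseteq> D \<Longrightarrow>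
      D = {j. j < n \<and> j \<noteq> i \<and> A i j \<noteq> 0} \<and> F = {j. j < n \<and> j \<noteq> i \<and> A i j = - (\<sigma> i * \<sigma> j)}"
  proof -
    fix D F assume g: "G n \<sigma> A i D F" and d: "D \<subseteq> {..<n} - {i}" and f: "F \<subseteq> D"
    have pm: "j < n \<Longrightarrow> \<sigma> i * \<sigma> j = 1 \<or> \<sigma> i * \<sigma> j = -1" for j using SV_prod_pm[OF s i] by auto
    have A: "j < n \<Longrightarrow> j \<noteq> i \<Longrightarrow> A i j = tgt \<sigma> i D F j" for j using g by (auto simp: G_def)
    show "D = {j. j < n \<and> j \<noteq> i \<and> A i j \<noteq> 0} \<and> F = {j. j < n \<and> j \<noteq> i \<and> A i j = - (\<sigma> i * \<sigma> j)}"
    proof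
      show "D = {j. j < n \<and> j \<noteq> i \<and> A i j \<noteq> 0}"
      proof (intro equalityI subsetI)
        fix j assume j: "j \<in> D"
        then have "j < n" "j \<noteq> i" using d by auto
        then show "j \<in> {j. j < n \<and> j \<noteq> i \<and> A i j \<noteq> 0}" using A[of j] pm[of j] j by (auto simp: tgt_def)
      next
        fix j assume "j \<in> {j. j < n \<and> j \<noteq> i \<and> A i j \<noteq> 0}"
        then show "j \<in> D" using A[of j] by (auto simp: tgt_def split: if_splits)
      qed
      show "F = {j. j < n \<and> j \<noteq> i \<and> A i j = - (\<sigma> i * \<sigma> j)}"
      proof (intro equalityI subsetI)
        fix j assume j: "j \<in> F"
        then have "j < n" "j \<noteq> i" "j \<in> D" using d f by auto
        then show "j \<in> {j. j < n \<and> j \<noteq> i \<and> A i j = - (\<sigma> i * \<sigma> j)}" using A[of j] j by (auto simp: tgt_def)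
      next
        fix j assume j: "j \<in> {j. j < n \<and> j \<noteq> i \<and> A i j = - (\<sigma> i * \<sigma> j)}"
        then show "j \<in> F" using A[of j] pm[of j] by (auto simp: tgt_def split: if_splits)
      qed
    qed
  qed
  show ?thesis using key[OF g1 D] key[OF g2 D'] by simp
qed

context
  fixes n m k :: nat and p \<epsilon> :: real and \<sigma>
  assumes p0: "0 \<le> p" and p1: "p < 1" and e0: "0 \<le> \<epsilon>" and e1: "\<epsilon> \<le> 1" and mn: "m \<le> n"
    and s: "\<sigma> \<in> sign_vectors n"
begin

lemma wt_nonneg: "0 \<le> wt n k p \<epsilon>"
  using p0 p1 e0 e1 by (simp add: wt_def)

lemma EG_Q: "i < m \<Longrightarrow> q \<in> Qs n m k \<Longrightarrow> EE n p \<epsilon> \<sigma> (\<lambda>A. of_bool (G n \<sigma> A i (fst q) (snd q))) = wt n k p \<epsilon>"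
  unfolding wt_def using mn by (intro E_G[OF s]) (auto simp: Qs_def)

lemma EZ: "EE n p \<epsilon> \<sigma> (Zc n m k \<sigma>) = real m * real (card (Qs n m k)) * wt n k p \<epsilon>"
proof -
  have "EE n p \<epsilon> \<sigma> (Zc n m k \<sigma>) = (\<Sum>a\<in>{..<m} \<times> Qs n m k. wt n k p \<epsilon>)"
  proof -
    have "EE n p \<epsilon> \<sigma> (Zc n m k \<sigma>) = (\<Sum>a\<in>{..<m} \<times> Qs n m k.
       EE n p \<epsilon> \<sigma> (\<lambda>A. of_bool (G n \<sigma> A (fst a) (fst (snd a)) (snd (snd a)))))"
      unfolding Zc_def by (rule Ex_sum) simp
    also have "\<dots> = (\<Sum>a\<in>{..<m} \<times> Qs n m k. wt n k p \<epsilon>)"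
    proof (intro sum.cong refl)
      fix a assume "a \<in> {..<m} \<times> Qs n m k"
      then show "EE n p \<epsilon> \<sigma> (\<lambda>A. of_bool (G n \<sigma> A (fst a) (fst (snd a)) (snd (snd a)))) = wt n k p \<epsilon>"
        using EG_Q[of "fst a" "snd a"] by auto
    qed
    finally show ?thesis .
  qed
  thus ?thesis by (simp add: card_cartesian_product)
qed

lemma EGG_bound:
  assumes a: "a \<in> {..<m} \<times> Qs n m k" and b: "b \<in> {..<m} \<times> Qs n m k"
  shows "EE n p \<epsilon> \<sigma> (\<lambda>A. of_bool (G n \<sigma> A (fst a) (fst (snd a)) (snd (snd a))) *
                          of_bool (G n \<sigma> A (fst b) (fst (snd b)) (snd (snd b))))
     \<le> of_bool (a = b) * wt n k p \<epsilon> + (wt n k p \<epsilon>)^2 / (1 - p)"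
proof -
  obtain i D F where a': "a = (i, D, F)" by (cases a) auto
  obtain j D' F' where b': "b = (j, D', F')" by (cases b) auto
  have i: "i < m" "i < n" and j: "j < m" "j < n" using a b mn unfolding a' b' by auto
  have DQ: "D \<subseteq> {m..<n}" "card D = 2*k" "F \<subseteq> D" "card F = k" using a unfolding a' Qs_def by auto
  have DQ': "D' \<subseteq> {m..<n}" "card D' = 2*k" "F' \<subseteq> D'" "card F' = k" using b unfolding b' Qs_def by auto
  have w0: "0 \<le> (wt n k p \<epsilon>)^2 / (1 - p)" using p1 by simp
  have Dn: "D \<subseteq> {..<n}" "D' \<subseteq> {..<n}" using DQ(1) DQ'(1) by auto
  show ?thesis
  proof (cases "i = j")
    case True
    show ?thesis
    proof (cases "a = b")
      case True
      have "EE n p \<epsilon> \<sigma> (\<lambda>A. of_bool (G n \<sigma> A (fst a) (fst (snd a)) (snd (snd a))) *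
                          of_bool (G n \<sigma> A (fst b) (fst (snd b)) (snd (snd b)))) = wt n k p \<epsilon>"
        using EG_Q[of i "(D,F)"] a True[symmetric] unfolding a' by simp
      then show ?thesis using True w0 by simp
    next
      case False
      have "EE n p \<epsilon> \<sigma> (\<lambda>A. of_bool (G n \<sigma> A (fst a) (fst (snd a)) (snd (snd a))) *
                          of_bool (G n \<sigma> A (fst b) (fst (snd b)) (snd (snd b)))) = EE n p \<epsilon> \<sigma> (\<lambda>_. 0)"
        unfolding EE_def
      proof (intro sum.cong refl)
        fix A
        have D1: "D \<subseteq> {..<n} - {i}" "D' \<subseteq> {..<n} - {i}" using DQ DQ' i by auto
        have "\<not> (G n \<sigma> A i D F \<and> G n \<sigma> A i D' F')"
          using G_unique[OF s i(2) _ _ D1(1) DQ(3) D1(2) DQ'(3), of A] False \<open>i = j\<close> unfolding a' b' by auto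
        then show "cbm_lik n p \<epsilon> \<sigma> A * (of_bool (G n \<sigma> A (fst a) (fst (snd a)) (snd (snd a))) *
                          of_bool (G n \<sigma> A (fst b) (fst (snd b)) (snd (snd b)))) = cbm_lik n p \<epsilon> \<sigma> A * 0"
          unfolding a' b' using \<open>i = j\<close> by auto
      qed
      also have "\<dots> = 0" by (simp add: EE_def)
      finally show ?thesis using False w0 by simp
    qed
  next
    case False
    have jD: "j \<notin> D" using DQ j by auto
    have iD': "i \<notin> D'" using DQ' i by auto
    have "(1 - p) * EE n p \<epsilon> \<sigma> (\<lambda>A. of_bool (G n \<sigma> A i D F) * of_bool (G n \<sigma> A j D' F')) =
          wt n k p \<epsilon> * wt n k p \<epsilon>"
      using E_GG[OF s i(2) j(2) False _ _ jD iD', of p \<epsilon> F F'] DQ DQ' mn Dn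
        EG_Q[of i "(D,F)"] EG_Q[of j "(D',F')"] a b unfolding a' b' by auto
    then have "EE n p \<epsilon> \<sigma> (\<lambda>A. of_bool (G n \<sigma> A i D F) * of_bool (G n \<sigma> A j D' F')) = (wt n k p \<epsilon>)^2 / (1 - p)"
      using p1 by (simp add: field_simps power2_eq_square)
    then show ?thesis using False unfolding a' b' by simp
  qed
qed

lemma EZ2: "EE n p \<epsilon> \<sigma> (\<lambda>A. (Zc n m k \<sigma> A)^2) \<le>
   EE n p \<epsilon> \<sigma> (Zc n m k \<sigma>) + (EE n p \<epsilon> \<sigma> (Zc n m k \<sigma>))^2 / (1 - p)"
proof -
  let ?S = "{..<m} \<times> Qs n m k"
  let ?g = "\<lambda>a A. of_bool (G n \<sigma> A (fst a) (fst (snd a)) (snd (snd a))) :: real"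
  let ?w = "wt n k p \<epsilon>"
  have "EE n p \<epsilon> \<sigma> (\<lambda>A. (Zc n m k \<sigma> A)^2) = EE n p \<epsilon> \<sigma> (\<lambda>A. \<Sum>a\<in>?S. \<Sum>b\<in>?S. ?g a A * ?g b A)"
    unfolding Zc_def power2_eq_square sum_product by (rule refl)
  also have "\<dots> = (\<Sum>a\<in>?S. \<Sum>b\<in>?S. EE n p \<epsilon> \<sigma> (\<lambda>A. ?g a A * ?g b A))"
    apply (subst Ex_sum, simp)
    apply (intro sum.cong refl)
    apply (subst Ex_sum)
    by simp_all
  also have "\<dots> \<le> (\<Sum>a\<in>?S. \<Sum>b\<in>?S. of_bool (a = b) * ?w + ?w^2 / (1 - p))"
    by (intro sum_mono EGG_bound)
  also have "\<dots> = real (card ?S) * ?w + (real (card ?S))^2 * (?w^2 / (1 - p))"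
  proof -
    have inner: "(\<Sum>b\<in>?S. of_bool (a = b) * ?w + ?w^2 / (1 - p)) = ?w + real (card ?S) * (?w^2 / (1 - p))"
      if "a \<in> ?S" for a
    proof -
      have "(\<Sum>b\<in>?S. of_bool (a = b) * ?w) = (\<Sum>b\<in>?S. if a = b then ?w else 0)"
        by (intro sum.cong refl) simp
      also have "\<dots> = ?w" using that by (simp add: sum.delta)
      finally show ?thesis by (simp add: sum.distrib)
    qed
    have "(\<Sum>a\<in>?S. \<Sum>b\<in>?S. of_bool (a = b) * ?w + ?w^2 / (1 - p)) =
          (\<Sum>a\<in>?S. ?w + real (card ?S) * (?w^2 / (1 - p)))"
      by (intro sum.cong refl inner)
    also have "\<dots> = real (card ?S) * ?w + (real (card ?S))^2 * (?w^2 / (1 - p))"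
      by (simp add: algebra_simps power2_eq_square)
    finally show ?thesis .
  qed
  also have "real (card ?S) = real m * real (card (Qs n m k))" by (simp add: card_cartesian_product)
  finally show ?thesis unfolding EZ by (simp add: power_mult_distrib field_simps)
qed

lemma cheb:
  assumes mu: "0 < EE n p \<epsilon> \<sigma> (Zc n m k \<sigma>)"
  shows "EE n p \<epsilon> \<sigma> (\<lambda>A. 1 / (1 + Zc n m k \<sigma> A)) \<le> 6 / EE n p \<epsilon> \<sigma> (Zc n m k \<sigma>) + 4 * p / (1 - p)"
proof -
  define \<mu> where "\<mu> = EE n p \<epsilon> \<sigma> (Zc n m k \<sigma>)"
  have mu': "0 < \<mu>" using mu by (simp add: \<mu>_def)
  have Z0: "0 \<le> Zc n m k \<sigma> A" for A unfolding Zc_def by (intro sum_nonneg) auto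
  have pw: "1 / (1 + Zc n m k \<sigma> A) \<le> (4/\<mu>^2) * (Zc n m k \<sigma> A)^2 + (-8/\<mu>) * Zc n m k \<sigma> A + (4 + 2 / \<mu>)" for A
  proof -
    let ?Z = "Zc n m k \<sigma> A"
    have "1 / (1 + ?Z) \<le> 4 * (?Z - \<mu>)^2 / \<mu>^2 + 2 / \<mu>"
    proof (cases "?Z \<ge> \<mu> / 2")
      case True
      then have "1 / (1 + ?Z) \<le> 2 / \<mu>" using mu' Z0[of A] by (simp add: field_simps)
      moreover have "0 \<le> 4 * (?Z - \<mu>)^2 / \<mu>^2" by simp
      ultimately show ?thesis by linarith
    next
      case False
      then have "\<mu>/2 \<le> \<mu> - ?Z" by simp
      then have "(\<mu>/2)^2 \<le> (\<mu> - ?Z)^2" using mu' by (intro power_mono) auto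
      then have "1 \<le> 4 * (?Z - \<mu>)^2 / \<mu>^2" using mu' by (simp add: field_simps power2_commute)
      moreover have "1 / (1 + ?Z) \<le> 1" using Z0[of A] by simp
      moreover have "0 \<le> 2 / \<mu>" using mu' by simp
      ultimately show ?thesis by linarith
    qed
    also have "\<dots> = (4/\<mu>^2) * ?Z^2 + (-8/\<mu>) * ?Z + (4 + 2 / \<mu>)"
      using mu' by (simp add: field_simps power2_eq_square)
    finally show ?thesis .
  qed
  have "EE n p \<epsilon> \<sigma> (\<lambda>A. 1 / (1 + Zc n m k \<sigma> A)) \<le>
      EE n p \<epsilon> \<sigma> (\<lambda>A. (4/\<mu>^2) * (Zc n m k \<sigma> A)^2 + (-8/\<mu>) * Zc n m k \<sigma> A + (4 + 2 / \<mu>))"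
    using p0 p1 e0 e1 by (intro Ex_mono pw) auto
  also have "\<dots> = (4/\<mu>^2) * EE n p \<epsilon> \<sigma> (\<lambda>A. (Zc n m k \<sigma> A)^2) + (-8/\<mu>) * \<mu> + (4 + 2/\<mu>)"
    using Ex_lin[of n p \<epsilon> \<sigma> "4/\<mu>^2" "\<lambda>A. (Zc n m k \<sigma> A)^2" "-8/\<mu>" "Zc n m k \<sigma>" "4 + 2/\<mu>"]
    by (simp only: Ex_one[OF s] \<mu>_def[symmetric] mult_1_right)
  also have "\<dots> \<le> (4/\<mu>^2) * (\<mu> + \<mu>^2/(1-p)) + (-8/\<mu>) * \<mu> + (4 + 2/\<mu>)"
    using EZ2 mu' unfolding \<mu>_def by (intro add_right_mono mult_left_mono) auto
  also have "\<dots> = 6 / \<mu> + 4 * p / (1 - p)"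
    using mu' p1 by (simp add: field_simps power2_eq_square)
  finally show ?thesis by (simp add: \<mu>_def)
qed

end



definition flip :: "nat \<Rightarrow> (nat \<Rightarrow> int) \<Rightarrow> nat \<Rightarrow> int" where
  "flip i \<sigma> = \<sigma>(i := - \<sigma> i)"

lemma flip_flip [simp]: "flip i (flip i \<sigma>) = \<sigma>" by (simp add: flip_def)

lemma flip_SV: "\<sigma> \<in> sign_vectors n \<Longrightarrow> i < n \<Longrightarrow> flip i \<sigma> \<in> sign_vectors n"
  by (auto simp: sign_vectors_def flip_def)

definition Zset :: "nat \<Rightarrow> nat \<Rightarrow> nat \<Rightarrow> (nat \<Rightarrow> int) \<Rightarrow> (nat \<Rightarrow> nat \<Rightarrow> int) \<Rightarrow> nat set" where
  "Zset n m k \<sigma> A = {i\<in>{..<m}. \<exists>q\<in>Qs n m k. G n \<sigma> A i (fst q) (snd q)}"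

lemma Zc_card:
  assumes s: "\<sigma> \<in> sign_vectors n" and mn: "m \<le> n"
  shows "Zc n m k \<sigma> A = real (card (Zset n m k \<sigma> A))"
proof -
  have one: "(\<Sum>q\<in>Qs n m k. of_bool (G n \<sigma> A i (fst q) (snd q)) :: real) =
        of_bool (\<exists>q\<in>Qs n m k. G n \<sigma> A i (fst q) (snd q))" if i: "i < m" for i
  proof -
    let ?S = "Qs n m k \<inter> {q. G n \<sigma> A i (fst q) (snd q)}"
    have "card ?S \<le> Suc 0"
    proof (subst card_le_Suc0_iff_eq)
      show "\<forall>a1\<in>?S. \<forall>a2\<in>?S. a1 = a2"
      proof (intro ballI)
        fix a1 a2 assume a1: "a1 \<in> ?S" and a2: "a2 \<in> ?S"
        have sub: "fst a1 \<subseteq> {..<n} - {i}" "snd a1 \<subseteq> fst a1" "fst a2 \<subseteq> {..<n} - {i}" "snd a2 \<subseteq> fst a2"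
          using a1 a2 i by (auto simp: Qs_def)
        have "fst a1 = fst a2 \<and> snd a1 = snd a2"
          using G_unique[OF s _ _ _ sub(1,2,3,4)] a1 a2 i mn by auto
        then show "a1 = a2" by (simp add: prod_eq_iff)
      qed
    qed auto
    then have "card ?S = (if \<exists>q\<in>Qs n m k. G n \<sigma> A i (fst q) (snd q) then 1 else 0)"
      by (auto simp: le_Suc_eq card_eq_0_iff)
    then show ?thesis by simp
  qed
  have "Zc n m k \<sigma> A = (\<Sum>i<m. \<Sum>q\<in>Qs n m k. of_bool (G n \<sigma> A i (fst q) (snd q)))"
    unfolding Zc_def by (subst sum.cartesian_product) (simp add: case_prod_unfold)
  also have "\<dots> = (\<Sum>i<m. of_bool (i \<in> Zset n m k \<sigma> A))"
  proof (intro sum.cong refl)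
    fix i assume "i \<in> {..<m}"
    hence im: "i < m" by simp
    show "(\<Sum>q\<in>Qs n m k. of_bool (G n \<sigma> A i (fst q) (snd q)) :: real) = of_bool (i \<in> Zset n m k \<sigma> A)"
      unfolding one[OF im] Zset_def using im by simp
  qed
  also have "\<dots> = real (card (Zset n m k \<sigma> A))"
  proof -
    have "{..<m} \<inter> {i. i \<in> Zset n m k \<sigma> A} = Zset n m k \<sigma> A" by (auto simp: Zset_def)
    then show ?thesis by simp
  qed
  finally show ?thesis .
qed

lemma prodR:
  assumes s: "\<sigma> \<in> sign_vectors n" and i: "i < n" and D: "D \<subseteq> {..<n} - {i}" and F: "F \<subseteq> D"
  shows "(\<Prod>j\<in>{..<n}-{i}. pair_lik p \<epsilon> (\<sigma> i * \<sigma> j) (tgt \<sigma> i D F j)) =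
    (p*\<epsilon>)^card F * (p*(1-\<epsilon>))^card (D - F) * (1-p)^card (({..<n}-{i}) - D)"
proof -
  have fin: "finite ({..<n}-{i})" by auto
  have "(\<Prod>j\<in>{..<n}-{i}. pair_lik p \<epsilon> (\<sigma> i * \<sigma> j) (tgt \<sigma> i D F j)) =
     (\<Prod>j\<in>({..<n}-{i}) - D. pair_lik p \<epsilon> (\<sigma> i * \<sigma> j) (tgt \<sigma> i D F j)) *
     (\<Prod>j\<in>D. pair_lik p \<epsilon> (\<sigma> i * \<sigma> j) (tgt \<sigma> i D F j))"
    by (rule prod.subset_diff[OF D fin])
  moreover have "(\<Prod>j\<in>D. pair_lik p \<epsilon> (\<sigma> i * \<sigma> j) (tgt \<sigma> i D F j)) =
     (\<Prod>j\<in>D - F. pair_lik p \<epsilon> (\<sigma> i * \<sigma> j) (tgt \<sigma> i D F j)) *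
     (\<Prod>j\<in>F. pair_lik p \<epsilon> (\<sigma> i * \<sigma> j) (tgt \<sigma> i D F j))"
    by (rule prod.subset_diff[OF F]) (use fin D finite_subset in blast)
  moreover have "(\<Prod>j\<in>F. pair_lik p \<epsilon> (\<sigma> i * \<sigma> j) (tgt \<sigma> i D F j)) = (\<Prod>j\<in>F. p*\<epsilon>)"
    using F D by (intro prod.cong refl) (auto simp: tgt_def intro!: pair_lik_neg SV_prod_pm[OF s i])
  moreover have "(\<Prod>j\<in>D-F. pair_lik p \<epsilon> (\<sigma> i * \<sigma> j) (tgt \<sigma> i D F j)) = (\<Prod>j\<in>D-F. p*(1-\<epsilon>))"
    using F D by (intro prod.cong refl) (auto simp: tgt_def intro!: pair_lik_pos SV_prod_pm[OF s i])
  moreover have "(\<Prod>j\<in>({..<n}-{i}) - D. pair_lik p \<epsilon> (\<sigma> i * \<sigma> j) (tgt \<sigma> i D F j)) = (\<Prod>j\<in>({..<n}-{i}) - D. 1 - p)"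
    by (intro prod.cong refl) (auto simp: tgt_def)
  ultimately show ?thesis by (simp add: mult_ac)
qed

lemma cbm_lik_pairs: "cbm_lik n p \<epsilon> \<sigma> A = (\<Prod>e\<in>pairs n. pair_lik p \<epsilon> (\<sigma> (fst e) * \<sigma> (snd e)) (A (fst e) (snd e)))"
  unfolding cbm_lik_def pairs_def by (simp add: case_prod_unfold)

lemma lik_split:
  assumes i: "i < n" and A: "A \<in> observations n"
  shows "cbm_lik n p \<epsilon> \<sigma> A = (\<Prod>j\<in>{..<n}-{i}. pair_lik p \<epsilon> (\<sigma> i * \<sigma> j) (A i j)) *
     (\<Prod>e\<in>{e\<in>pairs n. fst e \<noteq> i \<and> snd e \<noteq> i}. pair_lik p \<epsilon> (\<sigma> (fst e) * \<sigma> (snd e)) (A (fst e) (snd e)))"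
proof -
  let ?h = "\<lambda>e. pair_lik p \<epsilon> (\<sigma> (fst e) * \<sigma> (snd e)) (A (fst e) (snd e))"
  let ?PI = "{e\<in>pairs n. fst e = i \<or> snd e = i}"
  have "pairs n = ?PI \<union> {e\<in>pairs n. fst e \<noteq> i \<and> snd e \<noteq> i}" by auto
  then have "cbm_lik n p \<epsilon> \<sigma> A = (\<Prod>e\<in>?PI. ?h e) * (\<Prod>e\<in>{e\<in>pairs n. fst e \<noteq> i \<and> snd e \<noteq> i}. ?h e)"
    unfolding cbm_lik_pairs by (subst prod.union_disjoint[symmetric]) auto
  also have "?PI = (\<lambda>j. (min i j, max i j)) ` ({..<n}-{i})"
  proof (intro equalityI subsetI)
    fix e assume "e \<in> ?PI"
    then obtain a b where e: "e = (a,b)" "a < b" "b < n" "a = i \<or> b = i" by (auto simp: pairs_def)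
    show "e \<in> (\<lambda>j. (min i j, max i j)) ` ({..<n}-{i})"
    proof (cases "a = i")
      case True thus ?thesis using e by (intro image_eqI[of _ _ b]) (auto simp: min_def max_def)
    next
      case False thus ?thesis using e by (intro image_eqI[of _ _ a]) (auto simp: min_def max_def)
    qed
  next
    fix e assume "e \<in> (\<lambda>j. (min i j, max i j)) ` ({..<n}-{i})"
    then obtain j where j: "j < n" "j \<noteq> i" "e = (min i j, max i j)" by auto
    then show "e \<in> ?PI" using i by (cases "i < j") (auto simp: pairs_def min_def max_def)
  qed
  also have "(\<Prod>e\<in>(\<lambda>j. (min i j, max i j)) ` ({..<n}-{i}). ?h e) = (\<Prod>j\<in>{..<n}-{i}. ?h (min i j, max i j))"
  proof (subst prod.reindex)
    show "inj_on (\<lambda>j. (min i j, max i j)) ({..<n} - {i})"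
      by (auto simp: inj_on_def min_def max_def split: if_splits)
  qed (simp add: o_def)
  also have "(\<Prod>j\<in>{..<n}-{i}. ?h (min i j, max i j)) = (\<Prod>j\<in>{..<n}-{i}. pair_lik p \<epsilon> (\<sigma> i * \<sigma> j) (A i j))"
  proof (intro prod.cong refl)
    fix j assume "j \<in> {..<n}-{i}"
    have "A j i = A i j" using A by (simp add: observations_def)
    then show "?h (min i j, max i j) = pair_lik p \<epsilon> (\<sigma> i * \<sigma> j) (A i j)"
      by (cases "i < j") (auto simp: min_def max_def mult.commute)
  qed
  finally show ?thesis .
qed

lemma pair_lik_negs: "s = 1 \<or> s = -1 \<Longrightarrow> pair_lik p \<epsilon> (- s) x = pair_lik p \<epsilon> s (- x)"
  by (auto simp: pair_lik_def)

lemma tgt_compl: "F \<subseteq> D \<Longrightarrow> - tgt \<sigma> i D F j = tgt \<sigma> i D (D - F) j"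
  by (auto simp: tgt_def)

context
  fixes n m k :: nat and \<sigma> A i D F
  assumes s: "\<sigma> \<in> sign_vectors n" and mn: "m \<le> n" and A: "A \<in> observations n"
    and i: "i < m" and q: "(D, F) \<in> Qs n m k" and g: "G n \<sigma> A i D F"
begin

lemma in_: "i < n" "D \<subseteq> {..<n} - {i}" "F \<subseteq> D" "card D = 2*k" "card F = k" "D \<subseteq> {m..<n}"
  using i mn q by (auto simp: Qs_def)

lemma cDF: "card (D - F) = k"
proof -
  have finD: "finite D" using in_(2) by (rule finite_subset) auto
  have "card (D - F) = card D - card F" by (rule card_Diff_subset[OF finite_subset[OF in_(3) finD] in_(3)])
  then show ?thesis using in_ by simp
qed

lemma flip_lik: "cbm_lik n p \<epsilon> (flip i \<sigma>) A = cbm_lik n p \<epsilon> \<sigma> A"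
proof -
  have iD: "i \<notin> D" using in_ by auto
  have finD: "finite D" using in_(2) by (rule finite_subset) auto
  have "card (D - F) = card D - card F" by (rule card_Diff_subset[OF finite_subset[OF in_(3) finD] in_(3)])
  then have cDF: "card (D - F) = k" using in_ by simp
  have DDF: "D - (D - F) = F" using in_ by auto
  have Aij: "j \<in> {..<n}-{i} \<Longrightarrow> A i j = tgt \<sigma> i D F j" for j using g by (auto simp: G_def)
  have rest: "(\<Prod>e\<in>{e\<in>pairs n. fst e \<noteq> i \<and> snd e \<noteq> i}. pair_lik p \<epsilon> (flip i \<sigma> (fst e) * flip i \<sigma> (snd e)) (A (fst e) (snd e)))
     = (\<Prod>e\<in>{e\<in>pairs n. fst e \<noteq> i \<and> snd e \<noteq> i}. pair_lik p \<epsilon> (\<sigma> (fst e) * \<sigma> (snd e)) (A (fst e) (snd e)))"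
    by (intro prod.cong refl) (auto simp: flip_def)
  have "(\<Prod>j\<in>{..<n}-{i}. pair_lik p \<epsilon> (flip i \<sigma> i * flip i \<sigma> j) (A i j)) =
        (\<Prod>j\<in>{..<n}-{i}. pair_lik p \<epsilon> (\<sigma> i * \<sigma> j) (tgt \<sigma> i D (D - F) j))"
  proof (intro prod.cong refl)
    fix j assume j: "j \<in> {..<n}-{i}"
    have "flip i \<sigma> i * flip i \<sigma> j = - (\<sigma> i * \<sigma> j)" using j by (simp add: flip_def)
    then show "pair_lik p \<epsilon> (flip i \<sigma> i * flip i \<sigma> j) (A i j) = pair_lik p \<epsilon> (\<sigma> i * \<sigma> j) (tgt \<sigma> i D (D - F) j)"
      using j Aij[OF j] pair_lik_negs[OF SV_prod_pm[OF s in_(1), of j]] tgt_compl[OF in_(3)] by auto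
  qed
  also have "\<dots> = (p*\<epsilon>)^card (D-F) * (p*(1-\<epsilon>))^card (D - (D-F)) * (1-p)^card (({..<n}-{i}) - D)"
    by (rule prodR[OF s in_(1,2)]) auto
  also have "\<dots> = (p*\<epsilon>)^card F * (p*(1-\<epsilon>))^card (D - F) * (1-p)^card (({..<n}-{i}) - D)"
    using cDF DDF in_ by simp
  also have "\<dots> = (\<Prod>j\<in>{..<n}-{i}. pair_lik p \<epsilon> (\<sigma> i * \<sigma> j) (tgt \<sigma> i D F j))"
    by (rule prodR[OF s in_(1,2,3), symmetric])
  also have "\<dots> = (\<Prod>j\<in>{..<n}-{i}. pair_lik p \<epsilon> (\<sigma> i * \<sigma> j) (A i j))"
    by (intro prod.cong refl) (simp add: Aij)
  finally show ?thesis
    using lik_split[OF in_(1) A, of p \<epsilon> "flip i \<sigma>"] lik_split[OF in_(1) A, of p \<epsilon> \<sigma>] rest by simp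
qed

lemma G_flip_other:
  assumes j: "j < m" "j \<noteq> i" and q': "(D', F') \<in> Qs n m k"
  shows "G n (flip i \<sigma>) A j D' F' \<longleftrightarrow> G n \<sigma> A j D' F'"
proof -
  have "i \<notin> D'" using q' i by (auto simp: Qs_def)
  then have "tgt (flip i \<sigma>) j D' F' l = tgt \<sigma> j D' F' l" for l
    using j by (auto simp: tgt_def flip_def)
  then show ?thesis by (simp add: G_def)
qed

lemma G_flip_self: "G n (flip i \<sigma>) A i D (D - F)"
proof -
  have iD: "i \<notin> D" using in_ by auto
  have "tgt (flip i \<sigma>) i D (D - F) l = tgt \<sigma> i D F l" for l
    using iD in_(3) by (cases "l = i") (auto simp: tgt_def flip_def)
  then show ?thesis using g by (simp add: G_def)
qed

lemma flip_Zset: "Zset n m k (flip i \<sigma>) A = Zset n m k \<sigma> A"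
proof -
  have q2: "(D, D - F) \<in> Qs n m k"
    using in_ q cDF by (auto simp: Qs_def)
  have iZ: "i \<in> Zset n m k \<sigma> A" using i q g unfolding Zset_def by force
  have iZ': "i \<in> Zset n m k (flip i \<sigma>) A" using i q2 G_flip_self unfolding Zset_def by force
  show ?thesis
  proof (intro set_eqI)
    fix j show "j \<in> Zset n m k (flip i \<sigma>) A \<longleftrightarrow> j \<in> Zset n m k \<sigma> A"
    proof (cases "j = i")
      case True thus ?thesis using iZ iZ' by simp
    next
      case False
      have "(\<exists>q\<in>Qs n m k. G n (flip i \<sigma>) A j (fst q) (snd q)) \<longleftrightarrow> (\<exists>q\<in>Qs n m k. G n \<sigma> A j (fst q) (snd q))"
        if "j < m" using G_flip_other[OF that False] by (metis prod.collapse)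
      then show ?thesis unfolding Zset_def by auto
    qed
  qed
qed

end

lemma Zset_sub: "Zset n m k \<sigma> A \<subseteq> {..<m}" by (auto simp: Zset_def)

lemma Zset_elim:
  assumes "i \<in> Zset n m k \<sigma> A"
  obtains D F where "i < m" "(D, F) \<in> Qs n m k" "G n \<sigma> A i D F"
  using assms unfolding Zset_def by auto



lemma SV_image: "sign_vectors n = (\<lambda>x i. if i < n then x i else 1) ` PiE {..<n} (\<lambda>_. {1,-1})"
proof (intro equalityI subsetI)
  fix \<sigma> assume s: "\<sigma> \<in> sign_vectors n"
  show "\<sigma> \<in> (\<lambda>x i. if i < n then x i else 1) ` PiE {..<n} (\<lambda>_. {1,-1})"
  proof (rule image_eqI[of _ _ "restrict \<sigma> {..<n}"])
    show "\<sigma> = (\<lambda>i. if i < n then restrict \<sigma> {..<n} i else 1)"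
      using s by (auto simp: sign_vectors_def fun_eq_iff)
    show "restrict \<sigma> {..<n} \<in> PiE {..<n} (\<lambda>_. {1,-1})" using s by (auto simp: sign_vectors_def)
  qed
qed (auto simp: sign_vectors_def PiE_def Pi_def)

lemma finite_SV [simp]: "finite (sign_vectors n)"
  unfolding SV_image by (intro finite_imageI finite_PiE) auto

lemma card_SV: "card (sign_vectors n) \<le> 2 ^ n"
proof -
  have "card (sign_vectors n) \<le> card (PiE {..<n} (\<lambda>_. {1::int,-1}))"
    unfolding SV_image by (rule card_image_le) (intro finite_PiE; auto)
  also have "\<dots> = 2 ^ n" by (simp add: card_PiE numeral_2_eq_2)
  finally show ?thesis .
qed

definition matchY :: "(nat \<Rightarrow> nat \<Rightarrow> real) \<Rightarrow> nat \<Rightarrow> (nat \<Rightarrow> int) \<Rightarrow> bool" where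
  "matchY Y n \<sigma> = (\<forall>i<n. \<forall>j<n. Y i j = real_of_int (\<sigma> i * \<sigma> j))"

lemma match_count:
  assumes s: "\<sigma> \<in> sign_vectors n" and S: "S \<subseteq> {..<n}"
  shows "card {i\<in>S. matchY Y n (flip i \<sigma>)} \<le> 2"
proof (rule ccontr)
  let ?M = "{i\<in>S. matchY Y n (flip i \<sigma>)}"
  assume "\<not> card ?M \<le> 2"
  then have c: "3 \<le> card ?M" by simp
  have finM: "finite ?M" using S by (auto intro: finite_subset)
  obtain i where i: "i \<in> ?M" using c by (metis all_not_in_conv card.empty not_numeral_le_zero)
  have c2: "2 \<le> card (?M - {i})" using c i finM by (simp add: card_Diff_singleton)
  obtain j where j: "j \<in> ?M - {i}" using c2 by (metis all_not_in_conv card.empty not_numeral_le_zero)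
  have c3: "1 \<le> card (?M - {i} - {j})" using c2 j finM by (simp add: card_Diff_singleton)
  obtain l where l: "l \<in> ?M - {i} - {j}" using c3
    by (metis all_not_in_conv card.empty not_one_le_zero)
  have n: "i < n" "l < n" using i l S by auto
  have "Y i l = real_of_int (flip i \<sigma> i * flip i \<sigma> l)" using i n unfolding matchY_def by auto
  also have "\<dots> = - real_of_int (\<sigma> i * \<sigma> l)" using l by (simp add: flip_def)
  finally have 1: "Y i l = - real_of_int (\<sigma> i * \<sigma> l)" .
  have "Y i l = real_of_int (flip j \<sigma> i * flip j \<sigma> l)" using j n unfolding matchY_def by auto
  also have "\<dots> = real_of_int (\<sigma> i * \<sigma> l)" using j l by (simp add: flip_def)
  finally have 2: "Y i l = real_of_int (\<sigma> i * \<sigma> l)" .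
  have "\<sigma> i * \<sigma> l = 1 \<or> \<sigma> i * \<sigma> l = -1" by (rule SV_prod_pm[OF s n])
  then show False using 1 2 by auto
qed

lemma step1:
  assumes A: "A \<in> observations n" and mn: "m \<le> n"
    and p: "0 \<le> p" "p \<le> 1" and e: "0 \<le> \<epsilon>" "\<epsilon> \<le> 1"
  shows "(\<Sum>\<sigma>\<in>sign_vectors n. cbm_lik n p \<epsilon> \<sigma> A * of_bool (matchY Y n \<sigma>)) \<le>
         3 * (\<Sum>\<sigma>\<in>sign_vectors n. cbm_lik n p \<epsilon> \<sigma> A / (1 + Zc n m k \<sigma> A))"
proof -
  let ?SV = "sign_vectors n"
  let ?Z = "\<lambda>\<sigma>. Zset n m k \<sigma> A"
  define f where "f \<sigma> = cbm_lik n p \<epsilon> \<sigma> A / (1 + real (card (?Z \<sigma>)))" for \<sigma>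
  have f0: "0 \<le> f \<sigma>" for \<sigma> unfolding f_def using cbm_lik_nonneg[OF p e] by simp
  have finZ: "finite (?Z \<sigma>)" for \<sigma> using Zset_sub by (rule finite_subset) auto
  have Zn: "?Z \<sigma> \<subseteq> {..<n}" for \<sigma> using Zset_sub[of n m k \<sigma> A] mn by auto
  have flipin: "flip i \<sigma> \<in> ?SV" "?Z (flip i \<sigma>) = ?Z \<sigma>" "f (flip i \<sigma>) = f \<sigma>"
    if s: "\<sigma> \<in> ?SV" and i: "i \<in> ?Z \<sigma>" for \<sigma> i
  proof -
    obtain D F where DF: "i < m" "(D, F) \<in> Qs n m k" "G n \<sigma> A i D F" using i by (rule Zset_elim)
    show "flip i \<sigma> \<in> ?SV" using flip_SV[OF s, of i] DF mn by auto
    show Zeq: "?Z (flip i \<sigma>) = ?Z \<sigma>" by (rule flip_Zset[OF s mn A DF])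
    show "f (flip i \<sigma>) = f \<sigma>" unfolding f_def Zeq flip_lik[OF s mn A DF] ..
  qed
  have Zc_eq: "Zc n m k \<sigma> A = real (card (?Z \<sigma>))" if "\<sigma> \<in> ?SV" for \<sigma> by (rule Zc_card[OF that mn])
  have a: "cbm_lik n p \<epsilon> \<sigma> A * of_bool (matchY Y n \<sigma>) =
        f \<sigma> * of_bool (matchY Y n \<sigma>) + (\<Sum>i\<in>?Z \<sigma>. f \<sigma> * of_bool (matchY Y n \<sigma>))" for \<sigma>
  proof -
    let ?c = "real (card (?Z \<sigma>))"
    let ?b = "of_bool (matchY Y n \<sigma>) :: real"
    have pos: "1 + ?c > 0" by simp
    have L: "cbm_lik n p \<epsilon> \<sigma> A = f \<sigma> * (1 + ?c)" unfolding f_def using pos by simp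
    have "(\<Sum>i\<in>?Z \<sigma>. f \<sigma> * ?b) = ?c * (f \<sigma> * ?b)" by simp
    then show ?thesis unfolding L by (simp add: algebra_simps)
  qed
  have b: "(\<Sum>\<sigma>\<in>?SV. \<Sum>i\<in>?Z \<sigma>. f \<sigma> * of_bool (matchY Y n \<sigma>)) =
           (\<Sum>\<sigma>\<in>?SV. \<Sum>i\<in>?Z \<sigma>. f \<sigma> * of_bool (matchY Y n (flip i \<sigma>)))"
  proof -
    have "(\<Sum>\<sigma>\<in>?SV. \<Sum>i\<in>?Z \<sigma>. f \<sigma> * of_bool (matchY Y n \<sigma>)) =
          (\<Sum>a\<in>(SIGMA \<sigma>:?SV. ?Z \<sigma>). f (fst a) * of_bool (matchY Y n (fst a)))"
      by (subst sum.Sigma) (auto simp: finZ case_prod_unfold)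
    also have "\<dots> = (\<Sum>a\<in>(SIGMA \<sigma>:?SV. ?Z \<sigma>). f (fst a) * of_bool (matchY Y n (flip (snd a) (fst a))))"
      by (rule sum.reindex_bij_witness[where i = "\<lambda>a. (flip (snd a) (fst a), snd a)" and j = "\<lambda>a. (flip (snd a) (fst a), snd a)"])
         (auto simp: flipin)
    also have "\<dots> = (\<Sum>\<sigma>\<in>?SV. \<Sum>i\<in>?Z \<sigma>. f \<sigma> * of_bool (matchY Y n (flip i \<sigma>)))"
      by (subst sum.Sigma) (auto simp: finZ case_prod_unfold)
    finally show ?thesis .
  qed
  have c: "(\<Sum>i\<in>?Z \<sigma>. f \<sigma> * of_bool (matchY Y n (flip i \<sigma>))) \<le> 2 * f \<sigma>" if s: "\<sigma> \<in> ?SV" for \<sigma>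
  proof -
    have "(\<Sum>i\<in>?Z \<sigma>. f \<sigma> * of_bool (matchY Y n (flip i \<sigma>))) =
          f \<sigma> * real (card (?Z \<sigma> \<inter> {i. matchY Y n (flip i \<sigma>)}))"
      by (simp add: sum_distrib_left[symmetric] finZ)
    also have "card (?Z \<sigma> \<inter> {i. matchY Y n (flip i \<sigma>)}) = card {i\<in>?Z \<sigma>. matchY Y n (flip i \<sigma>)}"
      by (metis Collect_conj_eq Collect_mem_eq)
    also have "f \<sigma> * real \<dots> \<le> f \<sigma> * 2"
      using match_count[OF s Zn, where Y=Y] f0[of \<sigma>] by (intro mult_left_mono) auto
    finally show ?thesis by simp
  qed
  have "(\<Sum>\<sigma>\<in>?SV. cbm_lik n p \<epsilon> \<sigma> A * of_bool (matchY Y n \<sigma>)) =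
        (\<Sum>\<sigma>\<in>?SV. f \<sigma> * of_bool (matchY Y n \<sigma>)) + (\<Sum>\<sigma>\<in>?SV. \<Sum>i\<in>?Z \<sigma>. f \<sigma> * of_bool (matchY Y n \<sigma>))"
    unfolding a by (simp add: sum.distrib)
  also have "\<dots> = (\<Sum>\<sigma>\<in>?SV. f \<sigma> * of_bool (matchY Y n \<sigma>) + (\<Sum>i\<in>?Z \<sigma>. f \<sigma> * of_bool (matchY Y n (flip i \<sigma>))))"
    unfolding b by (simp add: sum.distrib)
  also have "\<dots> \<le> (\<Sum>\<sigma>\<in>?SV. f \<sigma> + 2 * f \<sigma>)"
  proof (intro sum_mono add_mono c)
    fix \<sigma> show "f \<sigma> * of_bool (matchY Y n \<sigma>) \<le> f \<sigma>" using f0[of \<sigma>] by simp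
  qed
  also have "\<dots> = 3 * (\<Sum>\<sigma>\<in>?SV. cbm_lik n p \<epsilon> \<sigma> A / (1 + Zc n m k \<sigma> A))"
    by (simp add: sum_distrib_left f_def Zc_eq)
  finally show ?thesis .
qed



lemma main_bound:
  assumes p0: "0 < p" and p1: "p < 1" and e0: "0 \<le> \<epsilon>" and e1: "\<epsilon> \<le> 1" and mn: "m \<le> n"
    and mu: "0 < real m * real (card (Qs n m k)) * wt n k p \<epsilon>"
  shows "success_prob n p \<epsilon> Y \<le> 3 * (6 / (real m * real (card (Qs n m k)) * wt n k p \<epsilon>) + 4 * p / (1 - p))"
proof -
  let ?SV = "sign_vectors n"
  let ?B = "6 / (real m * real (card (Qs n m k)) * wt n k p \<epsilon>) + 4 * p / (1 - p)"
  have B0: "0 \<le> ?B" using mu p0 p1 by simp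
  have "success_prob n p \<epsilon> Y = (1 / 2^n) * (\<Sum>A\<in>observations n. \<Sum>\<sigma>\<in>?SV. cbm_lik n p \<epsilon> \<sigma> A * of_bool (matchY (Y A) n \<sigma>))"
    unfolding success_prob_def matchY_def
    by (subst sum.swap) (simp add: sum_distrib_left of_bool_def mult_ac)
  also have "\<dots> \<le> (1 / 2^n) * (\<Sum>A\<in>observations n. 3 * (\<Sum>\<sigma>\<in>?SV. cbm_lik n p \<epsilon> \<sigma> A / (1 + Zc n m k \<sigma> A)))"
    using p0 p1 e0 e1 by (intro mult_left_mono sum_mono step1[OF _ mn]) auto
  also have "\<dots> = 3 / 2^n * (\<Sum>\<sigma>\<in>?SV. EE n p \<epsilon> \<sigma> (\<lambda>A. 1 / (1 + Zc n m k \<sigma> A)))"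
    unfolding EE_def by (subst sum.swap) (simp add: sum_distrib_left)
  also have "\<dots> \<le> 3 / 2^n * (\<Sum>\<sigma>\<in>?SV. ?B)"
  proof (intro mult_left_mono sum_mono)
    fix \<sigma> assume s: "\<sigma> \<in> ?SV"
    have "EE n p \<epsilon> \<sigma> (Zc n m k \<sigma>) = real m * real (card (Qs n m k)) * wt n k p \<epsilon>"
      by (rule EZ) (use p0 p1 e0 e1 mn s in auto)
    then show "EE n p \<epsilon> \<sigma> (\<lambda>A. 1 / (1 + Zc n m k \<sigma> A)) \<le> ?B"
      using cheb[of p \<epsilon> m n \<sigma> k] p0 p1 e0 e1 mn s mu by simp
  qed auto
  also have "\<dots> = 3 * (real (card ?SV) / 2^n) * ?B" by simp
  also have "\<dots> \<le> 3 * 1 * ?B"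
    using card_SV[of n] B0 by (intro mult_right_mono mult_left_mono) (auto simp: field_simps)
  finally show ?thesis by simp
qed



lemma fact_exp_bound: "fact d * exp (real d) \<le> (real d + 1) ^ (d + 1)"
proof (induction d)
  case 0 then show ?case by simp
next
  case (Suc d)
  have key: "exp 1 * (real d + 1) ^ (d + 2) \<le> (real d + 2) ^ (d + 2)"
  proof -
    have pos: "0 < real d + 1" by simp
    have "1 - (real d + 1) / (real d + 2) \<le> ln ((real d + 2) / (real d + 1))"
      using ln_le_minus_one[of "(real d + 1) / (real d + 2)"] pos
      by (simp add: ln_div)
    moreover have "1 - (real d + 1) / (real d + 2) = 1 / (real d + 2)" by (simp add: field_simps)
    ultimately have "1 \<le> (real d + 2) * ln ((real d + 2) / (real d + 1))" by (simp add: field_simps)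
    then have "exp 1 \<le> exp ((real d + 2) * ln ((real d + 2) / (real d + 1)))" by simp
    also have "\<dots> = ((real d + 2) / (real d + 1)) ^ (d + 2)"
    proof -
      have y: "0 < (real d + 2) / (real d + 1)" by simp
      have "exp ((real d + 2) * ln ((real d + 2) / (real d + 1))) = exp (real (d+2) * ln ((real d + 2) / (real d + 1)))"
        by simp
      also have "\<dots> = exp (ln ((real d + 2) / (real d + 1))) ^ (d+2)" by (rule exp_of_nat_mult)
      also have "\<dots> = ((real d + 2) / (real d + 1)) ^ (d + 2)" using y by simp
      finally show ?thesis .
    qed
    also have "\<dots> = (real d + 2) ^ (d + 2) / (real d + 1) ^ (d + 2)" by (simp add: power_divide)
    finally have "exp 1 \<le> (real d + 2) ^ (d + 2) / (real d + 1) ^ (d + 2)" .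
    then show ?thesis using pos by (subst (asm) pos_le_divide_eq) auto
  qed
  have "fact (Suc d) * exp (real (Suc d)) = (real d + 1) * exp 1 * (fact d * exp (real d))"
    by (simp add: exp_add algebra_simps)
  also have "\<dots> \<le> (real d + 1) * exp 1 * (real d + 1) ^ (d + 1)"
    using Suc.IH by (intro mult_left_mono) auto
  also have "\<dots> = exp 1 * (real d + 1) ^ (d + 2)" by simp
  also have "\<dots> \<le> (real d + 2) ^ (d + 2)" by (rule key)
  finally show ?case by (simp add: add.commute)
qed

lemma binom_lower:
  assumes "d \<le> N"
  shows "(real N - real d) ^ d \<le> real (N choose d) * fact d"
proof -
  have "real (N choose d) * fact d = (\<Prod>i = 0..<d. real N - of_nat i)"
    by (simp add: binomial_gbinomial gbinomial_mult_fact')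
  also have "\<dots> \<ge> (\<Prod>i = 0..<d. real N - real d)"
    using assms by (intro prod_mono) auto
  finally show ?thesis by simp
qed

lemma central_lower: "4 ^ k \<le> real ((2*k) choose k) * (2 * real k + 1)"
proof (cases "k = 0")
  case True then show ?thesis by simp
next
  case False
  then have "4^k / (2 * real k) \<le> real ((2*k) choose k)" by (intro central_binomial_lower_bound) auto
  then have "4^k \<le> real ((2*k) choose k) * (2 * real k)" using False by (simp add: field_simps)
  also have "\<dots> \<le> real ((2*k) choose k) * (2 * real k + 1)" by (intro mult_left_mono) auto
  finally show ?thesis .
qed

lemma card_Qs:
  assumes "m \<le> n"
  shows "card (Qs n m k) = ((n - m) choose (2*k)) * ((2*k) choose k)"
proof -
  have "Qs n m k = (SIGMA D:{D. D \<subseteq> {m..<n} \<and> card D = 2*k}. {F. F \<subseteq> D \<and> card F = k})"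
    by (auto simp: Qs_def)
  also have "card \<dots> = (\<Sum>D\<in>{D. D \<subseteq> {m..<n} \<and> card D = 2*k}. card {F. F \<subseteq> D \<and> card F = k})"
    by (rule card_SigmaI) (auto intro: finite_subset[of _ "Pow {m..<n}"])
  also have "\<dots> = (\<Sum>D\<in>{D. D \<subseteq> {m..<n} \<and> card D = 2*k}. (2*k) choose k)"
  proof (intro sum.cong refl)
    fix D assume "D \<in> {D. D \<subseteq> {m..<n} \<and> card D = 2*k}"
    then have "finite D" "card D = 2*k" by (auto intro: finite_subset)
    then show "card {F. F \<subseteq> D \<and> card F = k} = (2*k) choose k" by (simp add: n_subsets)
  qed
  also have "\<dots> = ((n - m) choose (2*k)) * ((2*k) choose k)" by (simp add: n_subsets)
  finally show ?thesis .
qed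



lemma alg_aux:
  fixes D X Y F G e q mm :: real
  assumes "0 < D" "Y = F * G"
  shows "mm * (X * Y / D^d) * e * q / D^2 = mm * (X * e / D^(d+1)) * (F / D) * (G * q)"
proof -
  have "D^(d+1) = D^d * D" by simp
  moreover have "D^2 = D * D" by (simp add: power2_eq_square)
  moreover have "0 < D^d" using assms by simp
  ultimately show ?thesis using assms by (simp add: field_simps)
qed

lemma mu_lower:
  assumes p0: "0 < p" and p1: "p < 1" and e0: "0 \<le> \<epsilon>" and e1: "\<epsilon> \<le> 1" and mn: "m \<le> n"
    and dN: "2*k \<le> n - m"
  shows "real m * (((real (n-m) - real (2*k)) * p * (2 * sqrt (\<epsilon> * (1 - \<epsilon>)))) / (real (2*k) + 1)) ^ (2*k)
          * exp (real (2*k)) * (1-p)^n / (real (2*k) + 1)^2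
         \<le> real m * real (card (Qs n m k)) * wt n k p \<epsilon>"
proof -
  define d where "d = 2*k"
  define N where "N = n - m"
  define x where "x = real N - real d"
  define s where "s = 2 * sqrt (\<epsilon> * (1 - \<epsilon>))"
  have x0: "0 \<le> x" using dN by (simp add: x_def d_def N_def)
  have d1: "0 < real d + 1" by simp
  have C1: "x^d * exp (real d) / (real d + 1)^(d+1) \<le> real (N choose d)"
  proof -
    have "x^d * exp (real d) \<le> real (N choose d) * fact d * exp (real d)"
      using binom_lower[of d N] dN unfolding x_def d_def N_def by (intro mult_right_mono) auto
    also have "\<dots> = real (N choose d) * (fact d * exp (real d))" by simp
    also have "\<dots> \<le> real (N choose d) * (real d + 1)^(d+1)"
      by (intro mult_left_mono fact_exp_bound) auto
    finally show ?thesis using d1 by (simp add: divide_le_eq)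
  qed
  have C2: "4^k / (real d + 1) \<le> real (d choose k)"
    using central_lower[of k] d1 unfolding d_def by (simp add: divide_le_eq)
  have W: "(p*\<epsilon>)^k * (p*(1-\<epsilon>))^k * (1-p)^n \<le> wt n k p \<epsilon>"
  proof -
    have "(1-p)^n \<le> (1-p)^(n-1-2*k)" using p0 p1 by (intro power_decreasing) auto
    then show ?thesis unfolding wt_def using p0 e0 e1 by (intro mult_left_mono) auto
  qed
  have "real m * (x^d * exp (real d) / (real d + 1)^(d+1)) * (4^k / (real d + 1)) *
          ((p*\<epsilon>)^k * (p*(1-\<epsilon>))^k * (1-p)^n)
        \<le> real m * real (N choose d) * real (d choose k) * wt n k p \<epsilon>"
    using p0 p1 e0 e1 x0
    by (intro mult_mono C1 C2 W mult_nonneg_nonneg) auto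
  also have "\<dots> = real m * real (card (Qs n m k)) * wt n k p \<epsilon>"
    using card_Qs[OF mn, of k] by (simp add: N_def d_def)
  finally have main: "real m * (x^d * exp (real d) / (real d + 1)^(d+1)) * (4^k / (real d + 1)) *
          ((p*\<epsilon>)^k * (p*(1-\<epsilon>))^k * (1-p)^n) \<le> real m * real (card (Qs n m k)) * wt n k p \<epsilon>" .
  have s2: "s^2 = 4 * (\<epsilon> * (1 - \<epsilon>))" unfolding s_def using e0 e1 by (simp add: power_mult_distrib)
  have ps: "(p * s)^d = 4^k * ((p*\<epsilon>)^k * (p*(1-\<epsilon>))^k)"
  proof -
    have "(p * s) ^ d = ((p * s) ^ 2) ^ k" by (simp add: d_def power_mult)
    also have "(p * s) ^ 2 = 4 * ((p*\<epsilon>) * (p*(1-\<epsilon>)))"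
    proof -
      have "(p * s) ^ 2 = p^2 * s^2" by (rule power_mult_distrib)
      also have "\<dots> = p^2 * (4 * (\<epsilon> * (1 - \<epsilon>)))" by (simp only: s2)
      also have "\<dots> = 4 * ((p*\<epsilon>) * (p*(1-\<epsilon>)))" by (simp add: power2_eq_square algebra_simps)
      finally show ?thesis .
    qed
    finally show ?thesis by (simp add: power_mult_distrib)
  qed
  have "real m * ((x * p * s) / (real d + 1)) ^ d * exp (real d) * (1-p)^n / (real d + 1)^2
      = real m * (x^d * exp (real d) / (real d + 1)^(d+1)) * (4^k / (real d + 1)) *
          ((p*\<epsilon>)^k * (p*(1-\<epsilon>))^k * (1-p)^n)"
  proof -
    have "((x * p * s) / (real d + 1)) ^ d = x^d * (p * s)^d / (real d + 1)^d"
      by (simp add: power_divide power_mult_distrib mult.assoc)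
    then show ?thesis using alg_aux[OF d1 ps, where mm="real m" and X="x^d" and e="exp (real d)" and q="(1-p)^n"] by simp
  qed
  then show ?thesis using main by (simp add: x_def d_def N_def s_def)
qed



lemma asym_n:
  fixes a \<epsilon> \<beta> s g :: real and M n :: nat
  assumes a: "a > 0" and e0: "0 \<le> \<epsilon>" and e1: "\<epsilon> \<le> 1"
    and s_def: "s = 2 * sqrt (\<epsilon> * (1 - \<epsilon>))" and beta: "a - a * s = \<beta>" and b0: "0 \<le> \<beta>"
    and g: "g = (1 - \<beta>) / 2"
    and M6: "6 \<le> M" and Mg: "6 * a / real M \<le> g"
    and n3: "3 \<le> n" and nM: "2 * M \<le> n"
    and F2: "a * ln (real n) / real n \<le> 1 / real M"
    and F3: "2 * a^2 * (ln (real n))^2 / real n \<le> 1"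
    and F4: "s > 0 \<Longrightarrow> real M \<le> a * s * ln (real n)"
  shows "exp (-3) / (2 * real M) * real n powr g / (a * ln (real n) + 1)^2 \<le>
     real (n div M) * real (card (Qs n (n div M) (nat \<lfloor>a * s * ln (real n) / 2\<rfloor>)))
       * wt n (nat \<lfloor>a * s * ln (real n) / 2\<rfloor>) (a * ln (real n) / real n) \<epsilon>"
proof -
  define nr where "nr = real n"
  define L where "L = ln nr"
  define p where "p = a * L / nr"
  define k where "k = nat \<lfloor>a * s * L / 2\<rfloor>"
  define d where "d = 2 * k"
  define m where "m = n div M"
  define \<rho> where "\<rho> = 1 - 3 / real M"
  have M0: "real M \<ge> 6" using M6 by simp
  have nr3: "nr \<ge> 3" using n3 by (simp add: nr_def)
  have L1: "L \<ge> 1"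
  proof -
    have "exp 1 \<le> (3::real)" using exp_le by simp
    also have "3 \<le> nr" by (rule nr3)
    finally have "exp 1 \<le> nr" .
    then show ?thesis unfolding L_def using nr3 by (simp add: ln_ge_iff)
  qed
  have s0: "0 \<le> s" unfolding s_def using e0 e1 by simp
  have s1: "s \<le> 1"
  proof -
    have "0 \<le> a * (1 - s)" using beta b0 by (simp add: algebra_simps)
    then show ?thesis using a by (simp add: zero_le_mult_iff)
  qed
  have asL0: "0 \<le> a * s * L" using a s0 L1 by simp
  have k_le: "real k \<le> a * s * L / 2" unfolding k_def using asL0 by linarith
  have k_ge: "real k \<ge> a * s * L / 2 - 1" unfolding k_def using asL0 by linarith
  have d_le: "real d \<le> a * s * L" using k_le by (simp add: d_def)
  have d_ge: "real d \<ge> a * s * L - 2" using k_ge by (simp add: d_def)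
  have d_le': "real d \<le> a * L"
  proof -
    have "(a * L) * s \<le> a * L" using s1 a L1 by (intro mult_left_le) auto
    then show ?thesis using d_le by (simp add: mult_ac)
  qed
  have p0: "0 < p" unfolding p_def using a L1 nr3 by simp
  have pM: "p \<le> 1 / real M" using F2 by (simp add: p_def L_def nr_def)
  have "1 / real M \<le> 1 / 6" using M0 by (simp add: field_simps)
  then have p6: "p \<le> 1/2" using pM by linarith
  have p1: "p < 1" using p6 by simp
  have aLn: "a * L \<le> nr / real M" using F2 nr3 by (simp add: L_def nr_def field_simps)
  have mM: "real m * real M \<le> nr"
  proof -
    have "n div M * M \<le> n" by simp
    then show ?thesis unfolding m_def nr_def by (metis of_nat_le_iff of_nat_mult)
  qed
  have mM': "nr < (real m + 1) * real M" unfolding m_def nr_def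
  proof -
    have "n mod M < M" using M6 by simp
    moreover have e: "n div M * M + n mod M = n" by (rule div_mult_mod_eq)
    ultimately have "n < (n div M + 1) * M" unfolding distrib_right mult_1_left by linarith
    then show "real n < (real (n div M) + 1) * real M" by (metis of_nat_1 of_nat_add of_nat_less_iff of_nat_mult)
  qed
  have m_ge: "real m \<ge> nr / (2 * real M)"
  proof -
    have "nr / real M - 1 < real m" using mM' M0 by (simp add: field_simps)
    moreover have "nr / (2 * real M) \<le> nr / real M - 1"
    proof -
      have "2 * real M \<le> nr" using nM by (simp add: nr_def)
      then show ?thesis using M0 by (simp add: field_simps)
    qed
    ultimately show ?thesis by simp
  qed
  have m_le: "real m \<le> nr / real M" using mM M0 by (simp add: field_simps)
  have mn: "m \<le> n" by (simp add: m_def)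
  have Nreal: "real (n - m) = nr - real m" using mn by (simp add: nr_def)
  have Nd: "real (n - m) - real d \<ge> nr * (1 - 2 / real M)"
  proof -
    have dd: "real d \<le> nr / real M" using d_le' aLn by simp
    have "nr * (1 - 2 / real M) = nr - 2 * (nr / real M)" by (simp add: algebra_simps)
    then show ?thesis using Nreal m_le dd by linarith
  qed
  have dN: "2 * k \<le> n - m"
  proof -
    have "nr * (1 - 2 / real M) \<ge> 0" using M0 nr3 by (simp add: field_simps)
    then have "real d \<le> real (n - m)" using Nd by simp
    then show ?thesis by (simp add: d_def)
  qed
  define X where "X = (real (n - m) - real d) * p * s / (real d + 1)"
  have lower0: "real m * X ^ d * exp (real d) * (1-p)^n / (real d + 1)^2 \<le>
       real m * real (card (Qs n m k)) * wt n k p \<epsilon>"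
    using mu_lower[OF p0 p1 e0 e1 mn dN] unfolding X_def d_def s_def by simp
  have rho0: "0 \<le> \<rho>" unfolding \<rho>_def using M0 by (simp add: field_simps)
  have Xrho: "\<rho> ^ d \<le> X ^ d"
  proof (cases "s = 0")
    case True
    then have "k = 0" unfolding k_def by simp
    then show ?thesis by (simp add: d_def)
  next
    case False
    then have sp: "s > 0" using s0 by simp
    have asLM: "real M \<le> a * s * L" using F4[OF sp] by (simp add: L_def nr_def)
    have "X \<ge> \<rho>"
    proof -
      have ps: "p * s = a * s * L / nr" unfolding p_def by simp
      have "(real (n - m) - real d) * (p * s) \<ge> nr * (1 - 2 / real M) * (p * s)"
        using Nd p0 sp by (intro mult_right_mono) auto
      then have "(real (n - m) - real d) * p * s \<ge> nr * (1 - 2 / real M) * (a * s * L / nr)"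
        by (simp add: ps mult.assoc)
      also have "nr * (1 - 2 / real M) * (a * s * L / nr) = (1 - 2 / real M) * (a * s * L)"
        using nr3 by simp
      finally have num: "(real (n - m) - real d) * p * s \<ge> (1 - 2 / real M) * (a * s * L)" .
      have c0: "0 \<le> 1 - 2 / real M" using M0 by (simp add: field_simps)
      have "X \<ge> (1 - 2 / real M) * (a * s * L) / (real d + 1)"
        unfolding X_def using num by (intro divide_right_mono) auto
      also have "(1 - 2 / real M) * (a * s * L) / (real d + 1) \<ge> (1 - 2 / real M) * (a * s * L) / (a * s * L + 1)"
        using d_le c0 asL0 a s0 L1 by (intro divide_left_mono mult_nonneg_nonneg) auto
      also have "(a * s * L) / (a * s * L + 1) \<ge> 1 - 1 / real M"
        using asLM M0 asL0 by (simp add: field_simps)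
      then have "(1 - 2 / real M) * (a * s * L) / (a * s * L + 1) \<ge> (1 - 2 / real M) * (1 - 1 / real M)"
        using c0 by (metis mult_left_mono times_divide_eq_right)
      also have "(1 - 2 / real M) * (1 - 1 / real M) \<ge> \<rho>"
        unfolding \<rho>_def using M0 by (simp add: field_simps)
      finally show ?thesis by simp
    qed
    then show ?thesis using rho0 by (intro power_mono) auto
  qed
  have rho_exp: "exp (- (6 * a / real M) * L) \<le> \<rho> ^ d"
  proof -
    have x12: "3 / real M \<le> 1/2" using M0 by (simp add: field_simps)
    have "- (3 / real M) - 2 * (3 / real M)^2 \<le> ln \<rho>"
      unfolding \<rho>_def by (rule ln_one_minus_pos_lower_bound) (use M0 x12 in auto)
    moreover have "- (6 / real M) \<le> - (3 / real M) - 2 * (3 / real M)^2"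
      using M0 by (simp add: field_simps power2_eq_square)
    ultimately have lr: "- (6 / real M) \<le> ln \<rho>" by linarith
    have rp: "0 < \<rho>" unfolding \<rho>_def using M0 by (simp add: field_simps)
    have lr0: "ln \<rho> \<le> 0" unfolding \<rho>_def using M0 rp \<rho>_def by simp
    have "- (6 * a / real M) * L = (a * L) * (- (6 / real M))" by simp
    also have "\<dots> \<le> real d * (- (6 / real M))"
      using d_le' M0 by (intro mult_right_mono_neg) auto
    also have "\<dots> \<le> real d * ln \<rho>" using lr by (intro mult_left_mono) auto
    finally have "exp (- (6 * a / real M) * L) \<le> exp (real d * ln \<rho>)" by simp
    also have "\<dots> = \<rho> ^ d" using rp by (simp add: exp_of_nat_mult)
    finally show ?thesis .
  qed
  have exp_d: "exp (a * s * L - 2) \<le> exp (real d)" using d_ge by simp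
  have pw: "exp (- (a * L) - 1) \<le> (1 - p) ^ n"
  proof -
    have "- p - 2 * p^2 \<le> ln (1 - p)" by (rule ln_one_minus_pos_lower_bound) (use p0 p6 in auto)
    then have "nr * (- p - 2 * p^2) \<le> nr * ln (1 - p)" using nr3 by simp
    moreover have "nr * (- p - 2 * p^2) = - (a * L) - 2 * a^2 * L^2 / nr"
      unfolding p_def using nr3 by (simp add: field_simps power2_eq_square)
    moreover have "2 * a^2 * L^2 / nr \<le> 1" using F3 by (simp add: L_def nr_def)
    ultimately have "- (a * L) - 1 \<le> nr * ln (1 - p)" by linarith
    then have "exp (- (a * L) - 1) \<le> exp (nr * ln (1 - p))" by simp
    also have "\<dots> = (1 - p) ^ n" using p1 by (simp add: nr_def exp_of_nat_mult)
    finally show ?thesis .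
  qed
  have dsq: "(real d + 1)^2 \<le> (a * L + 1)^2" using d_le' by (intro power_mono) auto
  have Xd0: "0 \<le> X ^ d" using Xrho rho0 by (metis order.trans zero_le_power)
  have "exp (-3) / (2 * real M) * nr powr g / (a * L + 1)^2 =
        (nr / (2 * real M)) * (exp (- (6 * a / real M) * L + (a * s * L - 2) + (- (a * L) - 1)) * exp (((6 * a / real M) - g) * L)) / (a * L + 1)^2"
  proof -
    have "nr powr g = exp (g * L)" unfolding L_def using nr3 by (simp add: powr_def mult.commute)
    moreover have "nr * exp (- (6 * a / real M) * L + (a * s * L - 2) + (- (a * L) - 1)) * exp (((6 * a / real M) - g) * L)
        = exp (-3) * exp (g * L)"
    proof -
      have "nr = exp L" unfolding L_def using nr3 by simp
      moreover have "L + (- (6 * a / real M) * L + (a * s * L - 2) + (- (a * L) - 1)) + ((6 * a / real M) - g) * L = -3 + g * L"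
      proof -
        have "a = 1 - 2 * g + a * s" using beta g by simp
        then have E: "a * L = L - 2 * g * L + a * s * L" by (metis (no_types) arg_cong[where f="\<lambda>x. x * L"] left_diff_distrib distrib_right mult_1_left mult.assoc mult.commute)
        have "L + (- (6 * a / real M) * L + (a * s * L - 2) + (- (a * L) - 1)) + ((6 * a / real M) - g) * L
            = L + a * s * L - a * L - 3 - g * L" by (simp add: algebra_simps)
        also have "\<dots> = -3 + g * L" unfolding E by simp
        finally show ?thesis .
      qed
      ultimately show ?thesis by (simp add: exp_add[symmetric])
    qed
    ultimately show ?thesis by (simp add: field_simps)
  qed
  also have "\<dots> \<le> (nr / (2 * real M)) * (exp (- (6 * a / real M) * L + (a * s * L - 2) + (- (a * L) - 1))) / (a * L + 1)^2"
  proof -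
    have "exp (((6 * a / real M) - g) * L) \<le> 1" using Mg L1 by (simp add: mult_nonpos_nonneg)
    then show ?thesis using nr3 M0 by (intro divide_right_mono mult_left_mono) (auto simp: mult_le_cancel_left1)
  qed
  also have "\<dots> = (nr / (2 * real M)) * (exp (- (6 * a / real M) * L) * exp (a * s * L - 2) * exp (- (a * L) - 1)) / (a * L + 1)^2"
    by (simp only: exp_add)
  also have "\<dots> \<le> real m * (X ^ d * exp (real d) * (1 - p) ^ n) / (a * L + 1)^2"
    using m_ge Xrho rho_exp exp_d pw Xd0
    by (intro divide_right_mono mult_mono mult_nonneg_nonneg order.trans[OF rho_exp Xrho]) auto
  also have "\<dots> \<le> real m * (X ^ d * exp (real d) * (1 - p) ^ n) / (real d + 1)^2"
    using dsq Xd0 p1 a L1 by (intro divide_left_mono mult_nonneg_nonneg mult_pos_pos) auto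
  also have "\<dots> \<le> real m * real (card (Qs n m k)) * wt n k p \<epsilon>"
    using lower0 by (simp add: mult.assoc)
  finally show ?thesis by (simp add: nr_def L_def p_def k_def m_def)
qed



lemma lim_aux1:
  fixes a :: real assumes "a > 0"
  shows "((\<lambda>n::nat. a * ln (real n) / real n) \<longlongrightarrow> 0) sequentially"
  using assms by real_asymp

lemma lim_aux2:
  fixes a :: real assumes "a > 0"
  shows "((\<lambda>n::nat. 2 * a^2 * (ln (real n))^2 / real n) \<longlongrightarrow> 0) sequentially"
  using assms by real_asymp

lemma lim_aux3:
  fixes c :: real assumes "c > 0"
  shows "filterlim (\<lambda>n::nat. c * ln (real n)) at_top sequentially"
  using assms by real_asymp

lemma lim_aux5:
  fixes a g :: real assumes "a > 0" "g > 0"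
  shows "((\<lambda>n::nat. (a * ln (real n) + 1)^2 / real n powr g) \<longlongrightarrow> 0) sequentially"
  using assms by real_asymp

lemma lim_aux4:
  fixes a g C :: real assumes a: "a > 0" and g: "g > 0" and C: "C > 0"
  shows "((\<lambda>n::nat. 3 * (6 / (exp (-3) / (2 * C) * real n powr g / (a * ln (real n) + 1)^2)
           + 4 * (a * ln (real n) / real n) / (1 - a * ln (real n) / real n))) \<longlongrightarrow> 0) sequentially"
proof -
  define K where "K = exp (-3) / (2 * C)"
  have K: "K > 0" using C by (simp add: K_def)
  have t: "((\<lambda>n::nat. 3 * ((6 / K) * ((a * ln (real n) + 1)^2 / real n powr g)
           + 4 * (a * ln (real n) / real n) / (1 - a * ln (real n) / real n))) \<longlongrightarrow>
         3 * ((6 / K) * 0 + 4 * 0 / (1 - 0))) sequentially"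
    by (intro tendsto_intros lim_aux5[OF a g] lim_aux1[OF a]) auto
  have ev: "eventually (\<lambda>n::nat. 3 * ((6 / K) * ((a * ln (real n) + 1)^2 / real n powr g)
           + 4 * (a * ln (real n) / real n) / (1 - a * ln (real n) / real n)) =
       3 * (6 / (K * real n powr g / (a * ln (real n) + 1)^2)
           + 4 * (a * ln (real n) / real n) / (1 - a * ln (real n) / real n))) sequentially"
    using eventually_ge_at_top[of 1]
  proof (rule eventually_mono)
    fix n :: nat assume n: "1 \<le> n"
    then have "0 < real n powr g" by simp
    then show "3 * ((6 / K) * ((a * ln (real n) + 1)^2 / real n powr g)
           + 4 * (a * ln (real n) / real n) / (1 - a * ln (real n) / real n)) =
       3 * (6 / (K * real n powr g / (a * ln (real n) + 1)^2)
           + 4 * (a * ln (real n) / real n) / (1 - a * ln (real n) / real n))"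
      using K by (simp add: field_simps)
  qed
  show ?thesis using tendsto_cong[OF ev] t unfolding K_def by simp
qed



lemma success_nonneg: "0 \<le> p \<Longrightarrow> p \<le> 1 \<Longrightarrow> 0 \<le> \<epsilon> \<Longrightarrow> \<epsilon> \<le> 1 \<Longrightarrow> 0 \<le> success_prob n p \<epsilon> Y"
  unfolding success_prob_def by (intro sum_nonneg mult_nonneg_nonneg cbm_lik_nonneg) auto

theorem theorem7:
  fixes a \<epsilon> :: real
    and Yhat :: "nat \<Rightarrow> (nat \<Rightarrow> nat \<Rightarrow> int) \<Rightarrow> (nat \<Rightarrow> nat \<Rightarrow> real)"
  assumes "a > 0" and "0 \<le> \<epsilon>" and "\<epsilon> \<le> 1 / 2"
    and "a * (sqrt (1 - \<epsilon>) - sqrt \<epsilon>)\<^sup>2 < 1"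
  shows "(\<lambda>n. success_prob n (a * ln (real n) / real n) \<epsilon> (Yhat n)) \<longlonglongrightarrow> 0"
proof -
  note a = assms(1) and e0 = assms(2) and e12 = assms(3) and bl = assms(4)
  have e1: "\<epsilon> \<le> 1" using e12 by simp
  define \<beta> where "\<beta> = a * (sqrt (1 - \<epsilon>) - sqrt \<epsilon>)\<^sup>2"
  define s where "s = 2 * sqrt (\<epsilon> * (1 - \<epsilon>))"
  define g where "g = (1 - \<beta>) / 2"
  define M :: nat where "M = nat \<lceil>12 * a / (1 - \<beta>)\<rceil> + 6"
  have b1: "\<beta> < 1" using bl by (simp add: \<beta>_def)
  have b0: "0 \<le> \<beta>" using a by (simp add: \<beta>_def)
  have beta: "a - a * s = \<beta>"
  proof -
    have "(sqrt (1 - \<epsilon>) - sqrt \<epsilon>)\<^sup>2 = (sqrt (1 - \<epsilon>))\<^sup>2 - 2 * (sqrt (1 - \<epsilon>) * sqrt \<epsilon>) + (sqrt \<epsilon>)\<^sup>2"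
      by (simp add: power2_diff)
    also have "\<dots> = 1 - s" using e0 e1 unfolding s_def by (simp add: real_sqrt_mult[symmetric] mult.commute)
    finally have "\<beta> = a * (1 - s)" unfolding \<beta>_def by simp
    then show ?thesis by (simp add: algebra_simps)
  qed
  have g0: "g > 0" using b1 by (simp add: g_def)
  have M6: "6 \<le> M" by (simp add: M_def)
  have MR: "12 * a / (1 - \<beta>) \<le> real M"
  proof -
    have "12 * a / (1 - \<beta>) \<le> real (nat \<lceil>12 * a / (1 - \<beta>)\<rceil>)" by linarith
    then show ?thesis by (simp add: M_def)
  qed
  have Mpos: "0 < real M" using M6 by simp
  have Mg: "6 * a / real M \<le> g"
  proof -
    have "6 * a = g * (12 * a / (1 - \<beta>))" using b1 by (simp add: g_def field_simps)
    also have "\<dots> \<le> g * real M" using MR g0 by (intro mult_left_mono) auto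
    finally show ?thesis using Mpos by (simp add: divide_le_eq mult.commute)
  qed
  define p where "p n = a * ln (real n) / real n" for n :: nat
  define k where "k n = nat \<lfloor>a * s * ln (real n) / 2\<rfloor>" for n :: nat
  define \<mu> where "\<mu> n = real (n div M) * real (card (Qs n (n div M) (k n))) * wt n (k n) (p n) \<epsilon>" for n :: nat
  define \<Phi> where "\<Phi> n = exp (-3) / (2 * real M) * real n powr g / (a * ln (real n) + 1)^2" for n :: nat
  define U where "U n = 3 * (6 / \<Phi> n + 4 * p n / (1 - p n))" for n :: nat
  have ev1: "eventually (\<lambda>n. 3 \<le> n \<and> 2 * M \<le> n) sequentially"
    using eventually_ge_at_top[of "max 3 (2*M)"] by (rule eventually_mono) auto
  have ev2: "eventually (\<lambda>n. a * ln (real n) / real n \<le> 1 / real M) sequentially"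
    using order_tendstoD(2)[OF lim_aux1[OF a], of "1 / real M"] Mpos
    by (auto elim: eventually_mono)
  have ev3: "eventually (\<lambda>n. 2 * a^2 * (ln (real n))^2 / real n \<le> 1) sequentially"
    using order_tendstoD(2)[OF lim_aux2[OF a], of 1] by (auto elim: eventually_mono)
  have ev4: "eventually (\<lambda>n. s > 0 \<longrightarrow> real M \<le> a * s * ln (real n)) sequentially"
  proof (cases "s > 0")
    case True
    then have "a * s > 0" using a by simp
    from lim_aux3[OF this] have "eventually (\<lambda>n. real M \<le> a * s * ln (real n)) sequentially"
      by (simp add: filterlim_at_top)
    then show ?thesis by (rule eventually_mono) simp
  qed simp
  have ev: "eventually (\<lambda>n. 0 \<le> success_prob n (p n) \<epsilon> (Yhat n) \<and> success_prob n (p n) \<epsilon> (Yhat n) \<le> U n) sequentially"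
    using ev1 ev2 ev3 ev4
  proof (eventually_elim)
    case (elim n)
    then have n3: "3 \<le> n" and nM: "2 * M \<le> n" by auto
    have L0: "0 < ln (real n)" using n3 by simp
    have p0: "0 < p n" unfolding p_def using a L0 n3 by simp
    have "1 / real M < 1" using M6 by simp
    then have p1: "p n < 1" using elim(2) unfolding p_def by linarith
    have \<Phi>\<mu>: "\<Phi> n \<le> \<mu> n"
      unfolding \<Phi>_def \<mu>_def p_def k_def
      by (rule asym_n[OF a e0 e1 s_def beta b0 g_def M6 Mg n3 nM elim(2) elim(3) elim(4)[rule_format]])
    have \<Phi>0: "0 < \<Phi> n"
    proof -
      have "0 < a * ln (real n) + 1" using a L0 by (simp add: add_pos_pos)
      then show ?thesis unfolding \<Phi>_def using n3 Mpos by simp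
    qed
    have mu0: "0 < \<mu> n" using \<Phi>0 \<Phi>\<mu> by simp
    have "success_prob n (p n) \<epsilon> (Yhat n) \<le> 3 * (6 / \<mu> n + 4 * p n / (1 - p n))"
      unfolding \<mu>_def by (rule main_bound[OF p0 p1 e0 e1]) (use mu0 in \<open>auto simp: \<mu>_def\<close>)
    also have "\<dots> \<le> U n" unfolding U_def using \<Phi>0 \<Phi>\<mu>
      by (intro mult_left_mono add_right_mono divide_left_mono) auto
    finally show ?case using success_nonneg[of "p n" \<epsilon> n "Yhat n"] p0 p1 e0 e1 by auto
  qed
  have U0: "U \<longlonglongrightarrow> 0"
    unfolding U_def \<Phi>_def p_def using lim_aux4[OF a g0 Mpos] by simp
  have "(\<lambda>n. success_prob n (p n) \<epsilon> (Yhat n)) \<longlonglongrightarrow> 0"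
    by (rule tendsto_sandwich[OF _ _ tendsto_const U0]) (use ev in \<open>auto elim: eventually_mono\<close>)
  then show ?thesis by (simp add: p_def)
qed

end
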